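(* Suppose every IDR of the system $\mathcal{I}(E,\mathcal{F}(E))$ is of Restricted Case I form. Then the optimization version of the Entity Hardening problem — given $E'\subseteq E$ with $|E'|=K$ and an integer $k<K$, find $H\subseteq E$ with $|H|\le k$ maximizing the number $|\mathrm{KillSet}(E')\setminus F(E',H)|$ of protected entities — can be solved optimally in time polynomial in $n=|E|$.
   Context: A system $\mathcal{I}(E,\mathcal{F}(E))$ consists of a finite set $E$ of entities, $n=|E|$, and a set $\mathcal{F}(E)$ of interdependency relations (IDRs). Each entity $e$ has at most one IDR, of the form $e\leftarrow \sum_{i=1}^{m}\prod_{x\in s_i}x$ (a disjunction of conjunctions), where each minterm $s_i$ is a nonempty subset of $E$; it means $e$ is operational only if for at least one minterm all entities of that minterm are operational. Entities without an IDR can only fail initially. Failure dynamics: given an initially failing set $E'\subseteq E$ and a set $H\subseteq E$ of hardened entities (hardened entities never fail), put $F_0=E'\setminus H$ and $F_{t+1}=F_t\cup\{e\in E\setminus H: e \text{ has an IDR and every minterm of it contains an element of } F_t\}$; the final failed set is $F(E',H):=F_{n-1}$. $\mathrm{KillSet}(E'):=F(E',\emptyset)$. Restricted Case I: every IDR consists of a single minterm of size one, i.e. has the form $e_i\leftarrow e_j$ with $e_j\in E$. *)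

theory Defs
  imports Main
begin

text \<open>An IDR of entity e is an optional set of minterms (each minterm a set of
entities); None means e has no IDR.  The IDR Some M stands for
e <- sum over s in M of prod over x in s of x.\<close>

type_synonym 'a idrs = "'a \<Rightarrow> 'a set set option"

fun fail_iter :: "'a set \<Rightarrow> 'a idrs \<Rightarrow> 'a set \<Rightarrow> 'a set \<Rightarrow> nat \<Rightarrow> 'a set" where
  "fail_iter E idr E' H 0 = E' - H"
| "fail_iter E idr E' H (Suc t) =
     fail_iter E idr E' H t \<union>
     {e \<in> E - H. idr e \<noteq> None \<and> (\<forall>s \<in> the (idr e). s \<inter> fail_iter E idr E' H t \<noteq> {})}"

definition failset :: "'a set \<Rightarrow> 'a idrs \<Rightarrow> 'a set \<Rightarrow> 'a set \<Rightarrow> 'a set" where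
  "failset E idr E' H = fail_iter E idr E' H (card E - 1)"

definition KillSet :: "'a set \<Rightarrow> 'a idrs \<Rightarrow> 'a set \<Rightarrow> 'a set" where
  "KillSet E idr E' = failset E idr E' {}"

definition protected_count :: "'a set \<Rightarrow> 'a idrs \<Rightarrow> 'a set \<Rightarrow> 'a set \<Rightarrow> nat" where
  "protected_count E idr E' H = card (KillSet E idr E' - failset E idr E' H)"

definition wf_system :: "'a set \<Rightarrow> 'a idrs \<Rightarrow> bool" where
  "wf_system E idr \<longleftrightarrow> finite E \<and>
     (\<forall>e. idr e \<noteq> None \<longrightarrow> e \<in> E \<and> the (idr e) \<noteq> {} \<and> finite (the (idr e)) \<and>
          (\<forall>s \<in> the (idr e). s \<noteq> {} \<and> s \<subseteq> E))"

definition restricted_case_I :: "'a set \<Rightarrow> 'a idrs \<Rightarrow> bool" where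
  "restricted_case_I E idr \<longleftrightarrow>
     (\<forall>e \<in> E. idr e = None \<or> (\<exists>j \<in> E. idr e = Some {{j}}))"

definition optimal_hardening :: "'a set \<Rightarrow> 'a idrs \<Rightarrow> 'a set \<Rightarrow> nat \<Rightarrow> 'a set \<Rightarrow> bool" where
  "optimal_hardening E idr E' k H \<longleftrightarrow>
     H \<subseteq> E \<and> card H \<le> k \<and>
     (\<forall>H'. H' \<subseteq> E \<and> card H' \<le> k \<longrightarrow>
        protected_count E idr E' H' \<le> protected_count E idr E' H)"

section \<open>Machine model: unit-cost RAM with addition, truncated subtraction,
indirect addressing and conditional jumps (no multiplication), which is
polynomially equivalent to Turing machines.\<close>

datatype instr =
    Const nat nat
  | Add nat nat nat
  | Sub nat nat nat
  | Load nat nat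
  | Store nat nat
  | Jz nat nat
  | Jmp nat

type_synonym config = "nat \<times> (nat \<Rightarrow> nat)"

fun exec :: "instr \<Rightarrow> config \<Rightarrow> config" where
  "exec (Const r c) (pc, m) = (Suc pc, m(r := c))"
| "exec (Add r a b) (pc, m) = (Suc pc, m(r := m a + m b))"
| "exec (Sub r a b) (pc, m) = (Suc pc, m(r := m a - m b))"
| "exec (Load r a) (pc, m) = (Suc pc, m(r := m (m a)))"
| "exec (Store a r) (pc, m) = (Suc pc, m(m a := m r))"
| "exec (Jz r l) (pc, m) = (if m r = 0 then l else Suc pc, m)"
| "exec (Jmp l) (pc, m) = (l, m)"

definition step :: "instr list \<Rightarrow> config \<Rightarrow> config" where
  "step prog c = (if fst c < length prog then exec (prog ! fst c) c else c)"

definition run :: "instr list \<Rightarrow> nat \<Rightarrow> (nat \<Rightarrow> nat) \<Rightarrow> config" where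
  "run prog t m = (step prog ^^ t) (0, m)"

definition halted :: "instr list \<Rightarrow> config \<Rightarrow> bool" where
  "halted prog c \<longleftrightarrow> length prog \<le> fst c"

text \<open>Input encoding of a Restricted Case I instance with E = {0..<n}:
 cell 0 = n, cell 1 = k, cell 2+i = j+1 if e_i <- e_j and 0 if e_i has no IDR,
 cell 2+n+i = 1 if i in E' and 0 otherwise; every other cell is 0.
 Output convention: H = {i < n. cell (2+2n+i) is nonzero} after halting.\<close>
definition encode_input :: "nat \<Rightarrow> nat idrs \<Rightarrow> nat set \<Rightarrow> nat \<Rightarrow> (nat \<Rightarrow> nat)" where
  "encode_input n idr E' k = (\<lambda>a.
     if a = 0 then n
     else if a = 1 then k
     else if 2 \<le> a \<and> a < 2 + n then
       (let i = a - 2 in if \<exists>j. idr i = Some {{j}} then Suc (THE j. idr i = Some {{j}}) else 0)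
     else if 2 + n \<le> a \<and> a < 2 + 2 * n then (if a - (2 + n) \<in> E' then 1 else 0)
     else 0)"

definition decode_output :: "nat \<Rightarrow> (nat \<Rightarrow> nat) \<Rightarrow> nat set" where
  "decode_output n m = {i. i < n \<and> m (2 + 2 * n + i) \<noteq> 0}"

end

theory Submission
  imports Defs
begin


locale sys =
  fixes n :: nat and idr :: "nat idrs" and E' :: "nat set"
  assumes wf: "wf_system {0..<n} idr" and rc: "restricted_case_I {0..<n} idr"
    and sub: "E' \<subseteq> {0..<n}"
begin

definition par :: "nat \<Rightarrow> nat" where
  "par y = (if \<exists>j. idr y = Some {{j}} then Suc (THE j. idr y = Some {{j}}) else 0)"

lemma idr_lt: "idr y \<noteq> None \<Longrightarrow> y < n"
  using wf unfolding wf_system_def by auto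

lemma idr_cases: "idr y = None \<or> (\<exists>j. j < n \<and> idr y = Some {{j}})"
proof (cases "idr y = None")
  case False
  then have "y < n" by (rule idr_lt)
  then have "idr y = None \<or> (\<exists>j\<in>{0..<n}. idr y = Some {{j}})"
    using rc unfolding restricted_case_I_def by simp
  then show ?thesis using False by auto
qed simp

lemma par_Some: "idr y = Some {{j}} \<Longrightarrow> par y = Suc j"
  unfolding par_def by auto

lemma par_None: "idr y = None \<Longrightarrow> par y = 0"
  unfolding par_def by auto

lemma par_pos: "par y \<noteq> 0 \<Longrightarrow> idr y = Some {{par y - 1}} \<and> par y - 1 < n"
  using idr_cases[of y] par_None[of y] par_Some by force

fun walk :: "nat \<Rightarrow> nat \<Rightarrow> nat option" where
  "walk 0 y = (if y \<in> E' then Some y else None)"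
| "walk (Suc f) y = (if y \<in> E' then Some y else if par y = 0 then None else walk f (par y - 1))"

fun reach :: "nat set \<Rightarrow> nat \<Rightarrow> nat \<Rightarrow> bool" where
  "reach H 0 x = (x \<in> E' \<and> x \<notin> H)"
| "reach H (Suc i) x = (x \<notin> H \<and> (\<exists>j. idr x = Some {{j}} \<and> reach H i j))"

definition G where "G H t = {x. \<exists>i\<le>t. reach H i x}"
definition Fl where "Fl H = {x. \<exists>i. reach H i x}"
definition nxt where "nxt H S = {x. x \<notin> H \<and> (\<exists>j. idr x = Some {{j}} \<and> j \<in> S)}"

lemma G_Suc: "G H (Suc t) = G H t \<union> nxt H (G H t)"
proof (rule set_eqI, rule iffI)
  fix x assume "x \<in> G H (Suc t)"
  then obtain i where i: "i \<le> Suc t" "reach H i x" unfolding G_def by auto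
  show "x \<in> G H t \<union> nxt H (G H t)"
  proof (cases "i = Suc t")
    case True
    with i show ?thesis unfolding G_def nxt_def by auto
  next
    case False
    then have "i \<le> t" using i by simp
    with i show ?thesis unfolding G_def by blast
  qed
next
  fix x assume "x \<in> G H t \<union> nxt H (G H t)"
  then show "x \<in> G H (Suc t)"
  proof
    assume "x \<in> G H t" then show ?thesis unfolding G_def using le_SucI by blast
  next
    assume "x \<in> nxt H (G H t)"
    then obtain j i where "x \<notin> H" "idr x = Some {{j}}" "i \<le> t" "reach H i j"
      unfolding nxt_def G_def by auto
    then have "reach H (Suc i) x" "Suc i \<le> Suc t" by auto
    then show ?thesis unfolding G_def by blast
  qed
qed

lemma fail_iter_G: "fail_iter {0..<n} idr E' H t = G H t"
proof (induction t)
  case 0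
  then show ?case unfolding G_def using sub by auto
next
  case (Suc t)
  have "{e \<in> {0..<n} - H. idr e \<noteq> None \<and> (\<forall>s\<in>the (idr e). s \<inter> G H t \<noteq> {})} = nxt H (G H t)"
  proof (rule set_eqI)
    fix x
    show "x \<in> {e \<in> {0..<n} - H. idr e \<noteq> None \<and> (\<forall>s\<in>the (idr e). s \<inter> G H t \<noteq> {})} \<longleftrightarrow> x \<in> nxt H (G H t)"
      using idr_cases[of x] idr_lt[of x] unfolding nxt_def by auto
  qed
  then show ?case using Suc G_Suc by simp
qed

lemma reach_lt: "reach H i x \<Longrightarrow> x < n"
  by (cases i) (use sub idr_lt in auto)

lemma reach_notin: "reach H i x \<Longrightarrow> x \<notin> H"
  by (cases i) auto

lemma G_sub: "G H t \<subseteq> {0..<n}"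
  unfolding G_def using reach_lt by auto

lemma G_fin: "finite (G H t)"
  using G_sub finite_subset by blast

lemma G_mono: "t \<le> t' \<Longrightarrow> G H t \<subseteq> G H t'"
  unfolding G_def using le_trans by blast

lemma G_stable: "G H (Suc t) = G H t \<Longrightarrow> G H (t + s) = G H t"
  by (induction s) (auto simp: G_Suc)

lemma card_G: "(\<forall>t<m. G H t \<noteq> G H (Suc t)) \<Longrightarrow> card (G H m) \<ge> m + card (G H 0)"
proof (induction m)
  case 0 then show ?case by simp
next
  case (Suc m)
  then have "card (G H m) \<ge> m + card (G H 0)" by auto
  moreover have "G H m \<subset> G H (Suc m)" using Suc.prems G_mono[of m "Suc m" H] by auto
  then have "card (G H m) < card (G H (Suc m))" using G_fin psubset_card_mono by blast
  ultimately show ?case by simp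
qed

lemma nxt_empty: "nxt H {} = {}" unfolding nxt_def by auto

lemma G_final: assumes "0 < n" shows "G H t \<subseteq> G H (n - 1)"
proof -
  have eq: "G H (Suc (n - 1)) = G H (n - 1)"
  proof (rule ccontr)
    assume ne: "G H (Suc (n - 1)) \<noteq> G H (n - 1)"
    have all: "\<forall>t<n. G H t \<noteq> G H (Suc t)"
    proof (intro allI impI)
      fix t assume "t < n"
      show "G H t \<noteq> G H (Suc t)"
      proof
        assume e: "G H t = G H (Suc t)"
        have a: "t + (n - 1 - t) = n - 1" using \<open>t<n\<close> by simp
        have b: "t + (n - t) = Suc (n - 1)" using \<open>t<n\<close> by simp
        have "G H (n - 1) = G H t" using G_stable[OF e[symmetric], of "n - 1 - t"] a by simp
        moreover have "G H (Suc (n - 1)) = G H t" using G_stable[OF e[symmetric], of "n - t"] b by simp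
        ultimately show False using ne by simp
      qed
    qed
    have "G H 0 \<noteq> {}"
    proof
      assume "G H 0 = {}"
      then have "G H (Suc 0) = G H 0" using G_Suc nxt_empty by simp
      then show False using all assms by metis
    qed
    then have "card (G H 0) \<ge> 1" using G_fin by (simp add: Suc_leI card_gt_0_iff)
    moreover have "card (G H n) \<ge> n + card (G H 0)" using card_G all by blast
    moreover have "card (G H n) \<le> n" using card_mono[OF _ G_sub] by fastforce
    ultimately show False by simp
  qed
  show ?thesis
  proof (cases "t \<le> n - 1")
    case True then show ?thesis by (rule G_mono)
  next
    case False
    then have "G H (n - 1 + (t - (n - 1))) = G H (n - 1)" using G_stable eq by blast
    then show ?thesis using False by simp
  qed
qed

lemma failset_Fl: "0 < n \<Longrightarrow> failset {0..<n} idr E' H = Fl H"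
  unfolding failset_def fail_iter_G
  using G_final unfolding Fl_def G_def by auto blast

lemma failset_G: "failset {0..<n} idr E' H = G H (n - 1)"
  unfolding failset_def fail_iter_G by simp

lemma walk_E': "walk f x = Some y \<Longrightarrow> y \<in> E'"
  by (induction f arbitrary: x) (auto split: if_splits)

lemma walk_reach: "walk f x = Some y \<Longrightarrow> \<exists>i. reach {} i x"
proof (induction f arbitrary: x)
  case 0 then show ?case by (auto intro: exI[of _ 0] split: if_splits)
next
  case (Suc f)
  show ?case
  proof (cases "x \<in> E'")
    case True then show ?thesis by (auto intro: exI[of _ 0])
  next
    case False
    with Suc.prems have p: "par x \<noteq> 0" "walk f (par x - 1) = Some y" by (auto split: if_splits)
    then obtain i where "reach {} i (par x - 1)" using Suc.IH by blast
    then have "reach {} (Suc i) x" using par_pos[OF p(1)] by auto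
    then show ?thesis by blast
  qed
qed

lemma reach_walk: "reach {} i x \<Longrightarrow> walk i x \<noteq> None"
proof (induction i arbitrary: x)
  case 0 then show ?case by simp
next
  case (Suc i)
  then obtain j where j: "idr x = Some {{j}}" "reach {} i j" by auto
  then show ?case using Suc.IH par_Some[OF j(1)] by auto
qed

lemma walk_mono: "walk f x = Some y \<Longrightarrow> f \<le> g \<Longrightarrow> walk g x = Some y"
proof (induction f arbitrary: x g)
  case 0 then show ?case by (cases g) (auto split: if_splits)
next
  case (Suc f)
  then obtain g' where g: "g = Suc g'" "f \<le> g'" by (cases g) auto
  with Suc show ?case by (auto split: if_splits)
qed

lemma walk_det: "walk f x = Some y \<Longrightarrow> walk g x = Some y' \<Longrightarrow> y = y'"
  using walk_mono[of f x y "max f g"] walk_mono[of g x y' "max f g"] by auto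

lemma Fl_E': "x \<in> E' \<Longrightarrow> (x \<in> Fl H \<longleftrightarrow> x \<notin> H)"
  unfolding Fl_def using reach_notin by (auto intro: exI[of _ 0])

lemma Fl_step: assumes "x \<notin> E'" "idr x = Some {{j}}" "x \<notin> H"
  shows "x \<in> Fl H \<longleftrightarrow> j \<in> Fl H"
proof
  assume "x \<in> Fl H"
  then obtain i where i: "reach H i x" unfolding Fl_def by auto
  then obtain i' where "i = Suc i'" using assms by (cases i) auto
  with i assms show "j \<in> Fl H" unfolding Fl_def by auto
next
  assume "j \<in> Fl H"
  then obtain i where "reach H i j" unfolding Fl_def by auto
  then have "reach H (Suc i) x" using assms by auto
  then show "x \<in> Fl H" unfolding Fl_def by blast
qed

lemma L1: "T \<subseteq> E' \<Longrightarrow> walk f x = Some y \<Longrightarrow> (x \<in> Fl T \<longleftrightarrow> y \<notin> T)"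
proof (induction f arbitrary: x)
  case 0 then show ?case using Fl_E' by (auto split: if_splits)
next
  case (Suc f)
  show ?case
  proof (cases "x \<in> E'")
    case True then show ?thesis using Suc.prems Fl_E' by auto
  next
    case False
    with Suc.prems have p: "par x \<noteq> 0" "walk f (par x - 1) = Some y" by (auto split: if_splits)
    have "x \<notin> T" using False Suc.prems by auto
    then have "x \<in> Fl T \<longleftrightarrow> par x - 1 \<in> Fl T" using Fl_step False par_pos[OF p(1)] by blast
    then show ?thesis using Suc.IH[OF Suc.prems(1) p(2)] by simp
  qed
qed

lemma L2: "walk f x = Some y \<Longrightarrow> x \<notin> Fl H \<Longrightarrow> \<exists>h\<in>H. \<exists>g. walk g h = Some y"
proof (induction f arbitrary: x)
  case 0
  then have "x \<in> E'" "y = x" by (auto split: if_splits)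
  then show ?case using 0 Fl_E'[of x H] by (auto intro!: exI[of _ 0])
next
  case (Suc f)
  show ?case
  proof (cases "x \<in> E'")
    case True
    then have "y = x" using Suc.prems by auto
    then show ?thesis using True Suc.prems Fl_E'[of x H] by (auto intro!: exI[of _ 0])
  next
    case False
    with Suc.prems have p: "par x \<noteq> 0" "walk f (par x - 1) = Some y" by (auto split: if_splits)
    show ?thesis
    proof (cases "x \<in> H")
      case True then show ?thesis using Suc.prems(1) by blast
    next
      case xH: False
      then have "par x - 1 \<notin> Fl H" using Fl_step False par_pos[OF p(1)] Suc.prems(2) by blast
      then show ?thesis using Suc.IH[OF p(2)] by blast
    qed
  qed
qed

lemma KillSet_eq: "0 < n \<Longrightarrow> KillSet {0..<n} idr E' = {x. x < n \<and> walk n x \<noteq> None}"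
proof (rule set_eqI, rule iffI)
  fix x assume "x \<in> KillSet {0..<n} idr E'"
  then have "x \<in> G {} (n - 1)" unfolding KillSet_def failset_G .
  then obtain i where i: "i \<le> n - 1" "reach {} i x" unfolding G_def by auto
  then obtain y where wy: "walk i x = Some y" using reach_walk[OF i(2)] by auto
  have "i \<le> n" using i by simp
  then have "walk n x = Some y" by (rule walk_mono[OF wy])
  moreover have "x < n" using reach_lt i(2) .
  ultimately show "x \<in> {x. x < n \<and> walk n x \<noteq> None}" by simp
next
  assume "0 < n"
  fix x assume "x \<in> {x. x < n \<and> walk n x \<noteq> None}"
  then obtain y where "walk n x = Some y" by auto
  then obtain i where "reach {} i x" using walk_reach by blast
  then show "x \<in> KillSet {0..<n} idr E'" unfolding KillSet_def failset_Fl[OF \<open>0<n\<close>] Fl_def by auto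
qed

definition wset where "wset y = {x. x < n \<and> walk n x = Some y}"
definition wt where "wt y = card (wset y)"

lemma wset_disj: "y \<noteq> y' \<Longrightarrow> wset y \<inter> wset y' = {}"
  unfolding wset_def by auto

lemma card_U: "finite A \<Longrightarrow> card (\<Union>y\<in>A. wset y) = (\<Sum>y\<in>A. wt y)"
  unfolding wt_def by (rule card_UN_disjoint) (auto simp: wset_def)

lemma protected_sel: assumes "0 < n" "T \<subseteq> E'"
  shows "protected_count {0..<n} idr E' T = (\<Sum>y\<in>T. wt y)"
proof -
  have "T \<subseteq> {0..<n}" using assms(2) sub by auto
  then have fT: "finite T" by (rule finite_subset) simp
  have "KillSet {0..<n} idr E' - failset {0..<n} idr E' T = (\<Union>y\<in>T. wset y)"
  proof (rule set_eqI, rule iffI)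
    fix x assume x: "x \<in> KillSet {0..<n} idr E' - failset {0..<n} idr E' T"
    then obtain y where y: "x < n" "walk n x = Some y" using KillSet_eq[OF assms(1)] by auto
    have "x \<notin> Fl T" using x failset_Fl[OF assms(1)] by auto
    then have "y \<in> T" using L1[OF assms(2) y(2)] by auto
    then show "x \<in> (\<Union>y\<in>T. wset y)" using y unfolding wset_def by auto
  next
    fix x assume "x \<in> (\<Union>y\<in>T. wset y)"
    then obtain y where y: "y \<in> T" "x < n" "walk n x = Some y" unfolding wset_def by auto
    then have "x \<notin> Fl T" using L1[OF assms(2) y(3)] by auto
    then show "x \<in> KillSet {0..<n} idr E' - failset {0..<n} idr E' T"
      using y KillSet_eq[OF assms(1)] failset_Fl[OF assms(1)] by auto
  qed
  then show ?thesis unfolding protected_count_def using card_U fT by simp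
qed

lemma protected_any: assumes "0 < n" "H \<subseteq> {0..<n}"
  shows "\<exists>Gs. Gs \<subseteq> E' \<and> card Gs \<le> card H \<and> protected_count {0..<n} idr E' H \<le> (\<Sum>y\<in>Gs. wt y)"
proof -
  define Gs where "Gs = (\<lambda>h. the (walk n h)) ` {h\<in>H. walk n h \<noteq> None}"
  have fH: "finite H" using assms(2) by (rule finite_subset) simp
  have GE: "Gs \<subseteq> E'" unfolding Gs_def using walk_E' by auto
  have Gc: "card Gs \<le> card H" unfolding Gs_def
    by (rule order.trans[OF card_image_le]) (use fH in \<open>auto intro: card_mono\<close>)
 have fG: "finite Gs" unfolding Gs_def using fH by auto
  have "KillSet {0..<n} idr E' - failset {0..<n} idr E' H \<subseteq> (\<Union>y\<in>Gs. wset y)"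
  proof
    fix x assume x: "x \<in> KillSet {0..<n} idr E' - failset {0..<n} idr E' H"
    then obtain y where y: "x < n" "walk n x = Some y" using KillSet_eq[OF assms(1)] by auto
    have "x \<notin> Fl H" using x failset_Fl[OF assms(1)] by auto
    then obtain h g where h: "h \<in> H" "walk g h = Some y" using L2[OF y(2)] by blast
    then obtain i where "reach {} i h" using walk_reach by blast
    then have "h \<in> KillSet {0..<n} idr E'" unfolding KillSet_def failset_Fl[OF assms(1)] Fl_def by auto
    then obtain y' where "walk n h = Some y'" using KillSet_eq[OF assms(1)] by auto
    moreover then have "y' = y" using walk_det h by blast
    ultimately have "y \<in> Gs" unfolding Gs_def using h by force
    then show "x \<in> (\<Union>y\<in>Gs. wset y)" using y unfolding wset_def by auto
  qed
  then have "protected_count {0..<n} idr E' H \<le> card (\<Union>y\<in>Gs. wset y)"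
    unfolding protected_count_def
    by (rule card_mono[rotated]) (rule finite_subset[of _ "{..<n}"], auto simp: wset_def)
  also have "\<dots> = (\<Sum>y\<in>Gs. wt y)" using card_U fG by simp
  finally have "protected_count {0..<n} idr E' H \<le> (\<Sum>y\<in>Gs. wt y)" .
  with GE Gc show ?thesis by (intro exI[of _ Gs]) simp
qed

end

lemma exchange:
  fixes f :: "'a \<Rightarrow> nat"
  assumes "finite A" "finite T" "card A \<le> card T" "\<forall>a\<in>T. \<forall>b\<in>A - T. f b \<le> f a"
  shows "sum f A \<le> sum f T"
proof (cases "A - T = {}")
  case True
  then have "A \<subseteq> T" by auto
  then show ?thesis using assms sum_mono2 by blast
next
  case False
  have c: "card (A - T) \<le> card (T - A)"
  proof -
    have "card A = card (A \<inter> T) + card (A - T)" using assms(1)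
      by (metis Diff_Diff_Int card_Diff_subset_Int Int_lower1 card_mono finite_Int le_add_diff_inverse
          inf_commute add.commute card_Diff_subset diff_add_inverse)
    moreover have "card T = card (A \<inter> T) + card (T - A)" using assms(2)
      by (metis Int_commute card_Int_Diff)
    ultimately show ?thesis using assms(3) by simp
  qed
  have "card (A - T) > 0" using False assms(1) by (simp add: card_gt_0_iff)
  then have "card (T - A) > 0" using c by linarith
  then have "T - A \<noteq> {}" by (metis card.empty less_irrefl)
  define c where "c = Min (f ` (T - A))"
  have fTA: "finite (T - A)" using assms by auto
  have cl: "\<forall>a\<in>T - A. c \<le> f a" unfolding c_def using fTA by auto
  obtain a0 where "a0 \<in> T - A" "f a0 = c" unfolding c_def using fTA \<open>T - A \<noteq> {}\<close>
    by (metis (mono_tags, lifting) Min_in finite_imageI imageE image_is_empty)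
  then have bu: "\<forall>b\<in>A - T. f b \<le> c" using assms(4) by auto
  have "sum f (A - T) \<le> card (A - T) * c" using sum_bounded_above[of "A - T" f c] bu by simp
  also have "\<dots> \<le> card (T - A) * c" using c by simp
  also have "\<dots> \<le> sum f (T - A)" using sum_bounded_below[of "T - A" c f] cl by simp
  finally have "sum f (A - T) \<le> sum f (T - A)" .
  moreover have "sum f A = sum f (A \<inter> T) + sum f (A - T)"
    by (metis Int_Diff_Un Int_Diff_disjoint assms(1) finite_Diff finite_Int sum.union_disjoint)
  moreover have "sum f T = sum f (A \<inter> T) + sum f (T - A)"
    by (metis Int_Diff_Un Int_Diff_disjoint Int_commute assms(2) finite_Diff finite_Int sum.union_disjoint)
  ultimately show ?thesis by simp
qed

context sys begin

lemma optimal: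
  assumes "0 < n" "T \<subseteq> E'" "card T = k" "\<forall>a\<in>T. \<forall>b<n. b \<notin> T \<longrightarrow> wt b \<le> wt a"
  shows "optimal_hardening {0..<n} idr E' k T"
  unfolding optimal_hardening_def
proof (intro conjI allI impI)
  show "T \<subseteq> {0..<n}" using assms sub by auto
  show "card T \<le> k" using assms by simp
  fix H' assume H': "H' \<subseteq> {0..<n} \<and> card H' \<le> k"
  then obtain Gs where Gs: "Gs \<subseteq> E'" "card Gs \<le> card H'"
    "protected_count {0..<n} idr E' H' \<le> (\<Sum>y\<in>Gs. wt y)"
    using protected_any[OF assms(1)] by blast
  have GS: "Gs \<subseteq> {0..<n}" "T \<subseteq> {0..<n}" using Gs(1) assms(2) sub by auto
  have fin: "finite Gs" "finite T" using GS by (auto intro: finite_subset)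
  have c: "card Gs \<le> card T" using Gs(2) H' assms(3) by linarith
  have top: "\<forall>a\<in>T. \<forall>b\<in>Gs - T. wt b \<le> wt a" using assms(4) GS by auto
  have "(\<Sum>y\<in>Gs. wt y) \<le> (\<Sum>y\<in>T. wt y)"
    by (rule exchange[OF fin c top])
  moreover have "protected_count {0..<n} idr E' T = (\<Sum>y\<in>T. wt y)"
    by (rule protected_sel[OF assms(1,2)])
  ultimately show "protected_count {0..<n} idr E' H' \<le> protected_count {0..<n} idr E' T"
    using Gs(3) by linarith
qed

lemma wt_pos: "y \<in> E' \<Longrightarrow> wt y \<ge> 1"
proof -
  assume y: "y \<in> E'"
  then have "walk n y = Some y" by (cases n) simp_all
  then have "y \<in> wset y" using y sub unfolding wset_def by auto
  moreover have "finite (wset y)" unfolding wset_def by (rule finite_subset[of _ "{..<n}"]) auto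
  ultimately have "card (wset y) > 0" by (auto simp: card_gt_0_iff)
  then show ?thesis unfolding wt_def by simp
qed

lemma wt_zero: "y \<notin> E' \<Longrightarrow> wt y = 0"
  unfolding wt_def wset_def using walk_E' by auto

end



definition prog :: "instr list" where
  "prog = [(Add 1 1 0),
    (Add 1 1 0),
    (Add 1 1 0),
    (Add 1 1 0),
    (Add 1 1 0),
    (Add 1 1 0),
    (Add 1 1 0),
    (Add 1 1 0),
    (Add 1 1 0),
    (Add 1 1 0),
    (Add 1 1 0),
    (Add 1 1 0),
    (Add 1 1 0),
    (Add 1 1 0),
    (Add 1 1 0),
    (Add 1 1 0),
    (Store 1 2),
    (Const 2 1),
    (Add 1 1 2),
    (Store 1 3),
    (Add 1 1 2),
    (Store 1 4),
    (Add 1 1 2),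
    (Store 1 5),
    (Add 1 1 2),
    (Store 1 6),
    (Add 1 1 2),
    (Store 1 7),
    (Add 1 1 2),
    (Store 1 8),
    (Add 1 1 2),
    (Store 1 9),
    (Add 1 1 2),
    (Store 1 10),
    (Add 1 1 2),
    (Store 1 11),
    (Add 1 1 2),
    (Store 1 12),
    (Add 1 1 2),
    (Store 1 13),
    (Add 1 1 2),
    (Store 1 14),
    (Add 1 1 2),
    (Store 1 15),
    (Add 1 1 2),
    (Sub 3 1 0),
    (Sub 3 3 0),
    (Sub 3 3 0),
    (Sub 3 3 0),
    (Sub 3 3 0),
    (Sub 3 3 0),
    (Sub 3 3 0),
    (Sub 3 3 0),
    (Sub 3 3 0),
    (Sub 3 3 0),
    (Sub 3 3 0),
    (Sub 3 3 0),
    (Sub 3 3 0),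
    (Sub 3 3 0),
    (Sub 3 3 0),
    (Sub 3 3 0),
    (Const 11 14),
    (Sub 3 3 11),
    (Const 4 0),
    (Add 4 4 1),
    (Add 8 4 11),
    (Const 9 16),
    (Add 10 0 0),
    (Sub 10 10 11),
    (Jz 10 77),
    (Load 11 9),
    (Store 8 11),
    (Const 11 1),
    (Add 8 8 11),
    (Add 9 9 11),
    (Sub 10 10 11),
    (Jmp 69),
    (Const 8 0),
    (Add 8 8 4),
    (Const 11 14),
    (Sub 9 4 11),
    (Const 10 14),
    (Jz 10 90),
    (Load 11 9),
    (Store 8 11),
    (Const 11 1),
    (Add 8 8 11),
    (Add 9 9 11),
    (Sub 10 10 11),
    (Jmp 82),
    (Add 5 4 0),
    (Add 6 5 0),
    (Const 11 14),
    (Add 6 6 11),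
    (Add 7 6 0),
    (Const 8 0),
    (Const 9 0),
    (Add 9 9 8),
    (Const 10 0),
    (Add 10 10 0),
    (Add 12 5 9),
    (Load 11 12),
    (Jz 11 104),
    (Jmp 111),
    (Jz 10 115),
    (Add 12 4 9),
    (Load 11 12),
    (Jz 11 115),
    (Sub 9 11 2),
    (Sub 10 10 2),
    (Jmp 100),
    (Add 12 6 9),
    (Load 11 12),
    (Add 11 11 2),
    (Store 12 11),
    (Add 8 8 2),
    (Sub 11 0 8),
    (Jz 11 119),
    (Jmp 96),
    (Const 8 0),
    (Add 8 8 3),
    (Jz 8 144),
    (Const 13 0),
    (Const 14 0),
    (Const 15 0),
    (Add 12 6 15),
    (Load 11 12),
    (Sub 10 11 14),
    (Jz 10 133),
    (Const 13 0),
    (Add 13 13 15),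
    (Const 14 0),
    (Add 14 14 11),
    (Add 15 15 2),
    (Sub 10 0 15),
    (Jz 10 137),
    (Jmp 125),
    (Add 12 6 13),
    (Const 11 0),
    (Store 12 11),
    (Add 12 7 13),
    (Store 12 2),
    (Sub 8 8 2),
    (Jmp 121),
    (Const 3 0),
    (Add 3 3 0),
    (Const 1 0),
    (Add 1 1 7),
    (Add 0 0 0),
    (Const 2 2),
    (Add 0 0 2),
    (Jz 3 159),
    (Load 2 1),
    (Store 0 2),
    (Const 2 1),
    (Add 0 0 2),
    (Add 1 1 2),
    (Sub 3 3 2),
    (Jmp 151)]"

lemma prog_len: "length prog = 159" by (simp add: prog_def)

lemma prog_nth:
  "prog ! 0 = (Add 1 1 0)"
  "prog ! 1 = (Add 1 1 0)"
  "prog ! 2 = (Add 1 1 0)"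
  "prog ! 3 = (Add 1 1 0)"
  "prog ! 4 = (Add 1 1 0)"
  "prog ! 5 = (Add 1 1 0)"
  "prog ! 6 = (Add 1 1 0)"
  "prog ! 7 = (Add 1 1 0)"
  "prog ! 8 = (Add 1 1 0)"
  "prog ! 9 = (Add 1 1 0)"
  "prog ! 10 = (Add 1 1 0)"
  "prog ! 11 = (Add 1 1 0)"
  "prog ! 12 = (Add 1 1 0)"
  "prog ! 13 = (Add 1 1 0)"
  "prog ! 14 = (Add 1 1 0)"
  "prog ! 15 = (Add 1 1 0)"
  "prog ! 16 = (Store 1 2)"
  "prog ! 17 = (Const 2 1)"
  "prog ! 18 = (Add 1 1 2)"
  "prog ! 19 = (Store 1 3)"
  "prog ! 20 = (Add 1 1 2)"
  "prog ! 21 = (Store 1 4)"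
  "prog ! 22 = (Add 1 1 2)"
  "prog ! 23 = (Store 1 5)"
  "prog ! 24 = (Add 1 1 2)"
  "prog ! 25 = (Store 1 6)"
  "prog ! 26 = (Add 1 1 2)"
  "prog ! 27 = (Store 1 7)"
  "prog ! 28 = (Add 1 1 2)"
  "prog ! 29 = (Store 1 8)"
  "prog ! 30 = (Add 1 1 2)"
  "prog ! 31 = (Store 1 9)"
  "prog ! 32 = (Add 1 1 2)"
  "prog ! 33 = (Store 1 10)"
  "prog ! 34 = (Add 1 1 2)"
  "prog ! 35 = (Store 1 11)"
  "prog ! 36 = (Add 1 1 2)"
  "prog ! 37 = (Store 1 12)"
  "prog ! 38 = (Add 1 1 2)"
  "prog ! 39 = (Store 1 13)"
  "prog ! 40 = (Add 1 1 2)"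
  "prog ! 41 = (Store 1 14)"
  "prog ! 42 = (Add 1 1 2)"
  "prog ! 43 = (Store 1 15)"
  "prog ! 44 = (Add 1 1 2)"
  "prog ! 45 = (Sub 3 1 0)"
  "prog ! 46 = (Sub 3 3 0)"
  "prog ! 47 = (Sub 3 3 0)"
  "prog ! 48 = (Sub 3 3 0)"
  "prog ! 49 = (Sub 3 3 0)"
  "prog ! 50 = (Sub 3 3 0)"
  "prog ! 51 = (Sub 3 3 0)"
  "prog ! 52 = (Sub 3 3 0)"
  "prog ! 53 = (Sub 3 3 0)"
  "prog ! 54 = (Sub 3 3 0)"
  "prog ! 55 = (Sub 3 3 0)"
  "prog ! 56 = (Sub 3 3 0)"
  "prog ! 57 = (Sub 3 3 0)"
  "prog ! 58 = (Sub 3 3 0)"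
  "prog ! 59 = (Sub 3 3 0)"
  "prog ! 60 = (Sub 3 3 0)"
  "prog ! 61 = (Const 11 14)"
  "prog ! 62 = (Sub 3 3 11)"
  "prog ! 63 = (Const 4 0)"
  "prog ! 64 = (Add 4 4 1)"
  "prog ! 65 = (Add 8 4 11)"
  "prog ! 66 = (Const 9 16)"
  "prog ! 67 = (Add 10 0 0)"
  "prog ! 68 = (Sub 10 10 11)"
  "prog ! 69 = (Jz 10 77)"
  "prog ! 70 = (Load 11 9)"
  "prog ! 71 = (Store 8 11)"
  "prog ! 72 = (Const 11 1)"
  "prog ! 73 = (Add 8 8 11)"
  "prog ! 74 = (Add 9 9 11)"
  "prog ! 75 = (Sub 10 10 11)"
  "prog ! 76 = (Jmp 69)"
  "prog ! 77 = (Const 8 0)"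
  "prog ! 78 = (Add 8 8 4)"
  "prog ! 79 = (Const 11 14)"
  "prog ! 80 = (Sub 9 4 11)"
  "prog ! 81 = (Const 10 14)"
  "prog ! 82 = (Jz 10 90)"
  "prog ! 83 = (Load 11 9)"
  "prog ! 84 = (Store 8 11)"
  "prog ! 85 = (Const 11 1)"
  "prog ! 86 = (Add 8 8 11)"
  "prog ! 87 = (Add 9 9 11)"
  "prog ! 88 = (Sub 10 10 11)"
  "prog ! 89 = (Jmp 82)"
  "prog ! 90 = (Add 5 4 0)"
  "prog ! 91 = (Add 6 5 0)"
  "prog ! 92 = (Const 11 14)"
  "prog ! 93 = (Add 6 6 11)"
  "prog ! 94 = (Add 7 6 0)"
  "prog ! 95 = (Const 8 0)"
  "prog ! 96 = (Const 9 0)"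
  "prog ! 97 = (Add 9 9 8)"
  "prog ! 98 = (Const 10 0)"
  "prog ! 99 = (Add 10 10 0)"
  "prog ! 100 = (Add 12 5 9)"
  "prog ! 101 = (Load 11 12)"
  "prog ! 102 = (Jz 11 104)"
  "prog ! 103 = (Jmp 111)"
  "prog ! 104 = (Jz 10 115)"
  "prog ! 105 = (Add 12 4 9)"
  "prog ! 106 = (Load 11 12)"
  "prog ! 107 = (Jz 11 115)"
  "prog ! 108 = (Sub 9 11 2)"
  "prog ! 109 = (Sub 10 10 2)"
  "prog ! 110 = (Jmp 100)"
  "prog ! 111 = (Add 12 6 9)"
  "prog ! 112 = (Load 11 12)"
  "prog ! 113 = (Add 11 11 2)"
  "prog ! 114 = (Store 12 11)"
  "prog ! 115 = (Add 8 8 2)"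
  "prog ! 116 = (Sub 11 0 8)"
  "prog ! 117 = (Jz 11 119)"
  "prog ! 118 = (Jmp 96)"
  "prog ! 119 = (Const 8 0)"
  "prog ! 120 = (Add 8 8 3)"
  "prog ! 121 = (Jz 8 144)"
  "prog ! 122 = (Const 13 0)"
  "prog ! 123 = (Const 14 0)"
  "prog ! 124 = (Const 15 0)"
  "prog ! 125 = (Add 12 6 15)"
  "prog ! 126 = (Load 11 12)"
  "prog ! 127 = (Sub 10 11 14)"
  "prog ! 128 = (Jz 10 133)"
  "prog ! 129 = (Const 13 0)"
  "prog ! 130 = (Add 13 13 15)"
  "prog ! 131 = (Const 14 0)"
  "prog ! 132 = (Add 14 14 11)"
  "prog ! 133 = (Add 15 15 2)"
  "prog ! 134 = (Sub 10 0 15)"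
  "prog ! 135 = (Jz 10 137)"
  "prog ! 136 = (Jmp 125)"
  "prog ! 137 = (Add 12 6 13)"
  "prog ! 138 = (Const 11 0)"
  "prog ! 139 = (Store 12 11)"
  "prog ! 140 = (Add 12 7 13)"
  "prog ! 141 = (Store 12 2)"
  "prog ! 142 = (Sub 8 8 2)"
  "prog ! 143 = (Jmp 121)"
  "prog ! 144 = (Const 3 0)"
  "prog ! 145 = (Add 3 3 0)"
  "prog ! 146 = (Const 1 0)"
  "prog ! 147 = (Add 1 1 7)"
  "prog ! 148 = (Add 0 0 0)"
  "prog ! 149 = (Const 2 2)"
  "prog ! 150 = (Add 0 0 2)"
  "prog ! 151 = (Jz 3 159)"
  "prog ! 152 = (Load 2 1)"
  "prog ! 153 = (Store 0 2)"
  "prog ! 154 = (Const 2 1)"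
  "prog ! 155 = (Add 0 0 2)"
  "prog ! 156 = (Add 1 1 2)"
  "prog ! 157 = (Sub 3 3 2)"
  "prog ! 158 = (Jmp 151)"
  by (simp_all add: prog_def)


definition steps :: "nat \<Rightarrow> config \<Rightarrow> config" where "steps t c = (step prog ^^ t) c"

definition leads :: "config \<Rightarrow> (config \<Rightarrow> bool) \<Rightarrow> nat \<Rightarrow> bool" where
  "leads c P b \<longleftrightarrow> (\<exists>t\<le>b. P (steps t c))"

fun exN :: "nat \<Rightarrow> config \<Rightarrow> config" where
  "exN 0 c = c"
| "exN (Suc t) c = exN t (step prog c)"

lemma exN_numeral[simp]: "exN (numeral k) c = exN (pred_numeral k) (step prog c)"
  by (simp add: numeral_eq_Suc)

lemma exN_steps: "exN t c = steps t c"
  by (induction t arbitrary: c) (simp_all add: steps_def funpow_swap1)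

lemma leads_exN: "leads (exN N c) P b \<Longrightarrow> leads c P (N + b)"
  unfolding leads_def exN_steps
proof -
  assume "\<exists>t\<le>b. P (steps t (steps N c))"
  then obtain t where "t \<le> b" "P (steps t (steps N c))" by blast
  moreover have "steps t (steps N c) = steps (t + N) c" by (simp add: steps_def funpow_add)
  ultimately show "\<exists>t\<le>N + b. P (steps t c)" by (intro exI[of _ "t + N"]) auto
qed

lemma leads_done: "P c \<Longrightarrow> leads c P b"
  unfolding leads_def by (intro exI[of _ 0]) (simp add: steps_def)

lemma leads_seq: "leads c Q b1 \<Longrightarrow> (\<And>c'. Q c' \<Longrightarrow> leads c' P b2) \<Longrightarrow> leads c P (b1 + b2)"
proof -
  assume a: "leads c Q b1" and b: "\<And>c'. Q c' \<Longrightarrow> leads c' P b2"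
  from a obtain t1 where t1: "t1 \<le> b1" "Q (steps t1 c)" unfolding leads_def by blast
  from b[OF t1(2)] obtain t2 where t2: "t2 \<le> b2" "P (steps t2 (steps t1 c))" unfolding leads_def by blast
  have "steps t2 (steps t1 c) = steps (t2 + t1) c" by (simp add: steps_def funpow_add)
  with t1 t2 show ?thesis unfolding leads_def by (intro exI[of _ "t2 + t1"]) auto
qed

lemma leads_mono: "leads c P b \<Longrightarrow> b \<le> b' \<Longrightarrow> (\<And>c. P c \<Longrightarrow> P' c) \<Longrightarrow> leads c P' b'"
  unfolding leads_def by (meson order.trans)

lemma copy_loop:
  assumes code: "prog ! L = Jz cnt (L+8)" "prog ! Suc L = Load t s" "prog ! Suc (Suc L) = Store d t"
    "prog ! Suc (Suc (Suc L)) = Const t 1" "prog ! Suc (Suc (Suc (Suc L))) = Add d d t"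
    "prog ! Suc (Suc (Suc (Suc (Suc L)))) = Add s s t"
    "prog ! Suc (Suc (Suc (Suc (Suc (Suc L))))) = Sub cnt cnt t"
    "prog ! Suc (Suc (Suc (Suc (Suc (Suc (Suc L)))))) = Jmp L" "L + 8 \<le> length prog"
  and dist: "d \<noteq> s" "d \<noteq> t" "d \<noteq> cnt" "s \<noteq> t" "s \<noteq> cnt" "t \<noteq> cnt"
  shows "m cnt = c \<Longrightarrow> m d = D0 \<Longrightarrow> m s = S0 \<Longrightarrow>
    (\<forall>i<c. D0+i \<noteq> d \<and> D0+i \<noteq> s \<and> D0+i \<noteq> t \<and> D0+i \<noteq> cnt \<and>
       S0+i \<noteq> d \<and> S0+i \<noteq> s \<and> S0+i \<noteq> t \<and> S0+i \<noteq> cnt) \<Longrightarrow>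
    (\<forall>i<c. \<forall>j<c. D0+i \<noteq> S0+j) \<Longrightarrow>
    leads (L, m) (\<lambda>c'. fst c' = L+8 \<and> (\<forall>i<c. snd c' (D0+i) = m (S0+i)) \<and>
       (\<forall>a. a \<noteq> d \<and> a \<noteq> s \<and> a \<noteq> t \<and> a \<noteq> cnt \<and> (\<forall>i<c. a \<noteq> D0+i) \<longrightarrow> snd c' a = m a)) (8*c+1)"
proof (induction c arbitrary: m D0 S0)
  case 0
  have "exN 1 (L, m) = (L+8, m)" using code 0 by (simp add: step_def)
  then have "leads (exN 1 (L, m)) (\<lambda>c'. fst c' = L+8 \<and> (\<forall>i<0. snd c' (D0+i) = m (S0+i)) \<and>
       (\<forall>a. a \<noteq> d \<and> a \<noteq> s \<and> a \<noteq> t \<and> a \<noteq> cnt \<and> (\<forall>i<0. a \<noteq> D0+i) \<longrightarrow> snd c' a = m a)) 0"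
    by (intro leads_done) auto
  then show ?case using leads_exN by fastforce
next
  case (Suc c)
  define m1 where "m1 = m(t := m S0, D0 := m S0, t := 1, d := Suc D0, s := Suc S0, cnt := c)"
  have r: "D0 \<noteq> d" "D0 \<noteq> s" "D0 \<noteq> t" "D0 \<noteq> cnt" "S0 \<noteq> t"
    "d \<noteq> D0" "s \<noteq> D0" "t \<noteq> D0" "cnt \<noteq> D0" "t \<noteq> S0" using Suc.prems(4) by auto
  have dist': "s \<noteq> d" "t \<noteq> d" "cnt \<noteq> d" "t \<noteq> s" "cnt \<noteq> s" "cnt \<noteq> t" using dist by auto
  have pcs: "L < length prog" "Suc L < length prog" "Suc (Suc L) < length prog" "Suc (Suc (Suc L)) < length prog"
    "Suc (Suc (Suc (Suc L))) < length prog" "Suc (Suc (Suc (Suc (Suc L)))) < length prog"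
    "Suc (Suc (Suc (Suc (Suc (Suc L))))) < length prog" "Suc (Suc (Suc (Suc (Suc (Suc (Suc L)))))) < length prog"
    using code(9) by linarith+
  have e8: "exN 8 (L, m) = (L, m1)" using code(1-8) pcs Suc.prems(1-3) dist dist' r
    unfolding m1_def by (simp add: step_def)
  moreover have IHr: "leads (L, m1) (\<lambda>c'. fst c' = L+8 \<and> (\<forall>i<c. snd c' (Suc D0+i) = m1 (Suc S0+i)) \<and>
       (\<forall>a. a \<noteq> d \<and> a \<noteq> s \<and> a \<noteq> t \<and> a \<noteq> cnt \<and> (\<forall>i<c. a \<noteq> Suc D0+i) \<longrightarrow> snd c' a = m1 a)) (8*c+1)"
  proof (rule Suc.IH)
    show "m1 cnt = c" "m1 d = Suc D0" "m1 s = Suc S0" unfolding m1_def using dist' by simp_all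
    show "\<forall>i<c. Suc D0 + i \<noteq> d \<and> Suc D0 + i \<noteq> s \<and> Suc D0 + i \<noteq> t \<and> Suc D0 + i \<noteq> cnt \<and>
             Suc S0 + i \<noteq> d \<and> Suc S0 + i \<noteq> s \<and> Suc S0 + i \<noteq> t \<and> Suc S0 + i \<noteq> cnt"
    proof (intro allI impI)
      fix i assume "i < c" then have "Suc i < Suc c" by simp
      from Suc.prems(4)[rule_format, OF this]
      show "Suc D0 + i \<noteq> d \<and> Suc D0 + i \<noteq> s \<and> Suc D0 + i \<noteq> t \<and> Suc D0 + i \<noteq> cnt \<and>
             Suc S0 + i \<noteq> d \<and> Suc S0 + i \<noteq> s \<and> Suc S0 + i \<noteq> t \<and> Suc S0 + i \<noteq> cnt" by simp
    qed
    show "\<forall>i<c. \<forall>j<c. Suc D0 + i \<noteq> Suc S0 + j"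
    proof (intro allI impI)
      fix i j assume "i < c" "j < c" then have "Suc i < Suc c" "Suc j < Suc c" by simp_all
      from Suc.prems(5)[rule_format, OF this] show "Suc D0 + i \<noteq> Suc S0 + j" by simp
    qed
  qed
  have "leads (L, m) (\<lambda>c'. fst c' = L+8 \<and> (\<forall>i<c. snd c' (Suc D0+i) = m1 (Suc S0+i)) \<and>
       (\<forall>a. a \<noteq> d \<and> a \<noteq> s \<and> a \<noteq> t \<and> a \<noteq> cnt \<and> (\<forall>i<c. a \<noteq> Suc D0+i) \<longrightarrow> snd c' a = m1 a)) (8 + (8*c+1))"
    using leads_exN[of 8 "(L,m)", unfolded e8, OF IHr] .
  then show ?case
  proof (rule leads_mono)
    show "8 + (8 * c + 1) \<le> 8 * Suc c + 1" by simp
  next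
    fix c' assume a: "fst c' = L+8 \<and> (\<forall>i<c. snd c' (Suc D0+i) = m1 (Suc S0+i)) \<and>
       (\<forall>a. a \<noteq> d \<and> a \<noteq> s \<and> a \<noteq> t \<and> a \<noteq> cnt \<and> (\<forall>i<c. a \<noteq> Suc D0+i) \<longrightarrow> snd c' a = m1 a)"
    have "\<forall>i<Suc c. snd c' (D0+i) = m (S0+i)"
    proof (intro allI impI)
      fix i assume "i < Suc c"
      show "snd c' (D0+i) = m (S0+i)"
      proof (cases i)
        case 0
        have "D0 \<noteq> Suc D0 + i'" for i' by simp
        then have "snd c' D0 = m1 D0" using a r by auto
        also have "\<dots> = m S0" unfolding m1_def using r by simp
        finally show ?thesis using 0 by simp
      next
        case (Suc i')
        then have "snd c' (D0+i) = m1 (Suc S0+i')" using a \<open>i < Suc c\<close> by auto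
        also have "\<dots> = m (S0 + i)"
        proof -
          have p4: "S0 + i \<noteq> d \<and> S0 + i \<noteq> s \<and> S0 + i \<noteq> t \<and> S0 + i \<noteq> cnt"
            using Suc.prems(4)[rule_format, OF \<open>i < Suc c\<close>] by simp
          have p5: "D0 + 0 \<noteq> S0 + i" using Suc.prems(5)[rule_format, OF zero_less_Suc \<open>i < Suc c\<close>] .
          have e: "Suc S0 + i' = S0 + i" using Suc by simp
          have p5': "S0 + i \<noteq> D0" using p5 by simp
          show ?thesis by (simp only: e) (simp add: m1_def p4 p5')
        qed
        finally show ?thesis .
      qed
    qed
    moreover have "\<forall>a. a \<noteq> d \<and> a \<noteq> s \<and> a \<noteq> t \<and> a \<noteq> cnt \<and> (\<forall>i<Suc c. a \<noteq> D0+i) \<longrightarrow> snd c' a = m a"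
    proof (intro allI impI)
      fix x assume x: "x \<noteq> d \<and> x \<noteq> s \<and> x \<noteq> t \<and> x \<noteq> cnt \<and> (\<forall>i<Suc c. x \<noteq> D0+i)"
      have "\<forall>i<c. x \<noteq> Suc D0 + i"
      proof (intro allI impI)
        fix i assume "i < c" then have "Suc i < Suc c" by simp
        then have "x \<noteq> D0 + Suc i" using x by blast
        then show "x \<noteq> Suc D0 + i" by simp
      qed
      then have "snd c' x = m1 x" using a x by blast
      also have "\<dots> = m x"
      proof -
        have "x \<noteq> D0 + 0" using x by blast
        then show ?thesis using x unfolding m1_def by simp
      qed
      finally show "snd c' x = m x" .
    qed
    ultimately show "fst c' = L+8 \<and> (\<forall>i<Suc c. snd c' (D0+i) = m (S0+i)) \<and>
       (\<forall>a. a \<noteq> d \<and> a \<noteq> s \<and> a \<noteq> t \<and> a \<noteq> cnt \<and> (\<forall>i<Suc c. a \<noteq> D0+i) \<longrightarrow> snd c' a = m a)"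
      using a by blast
  qed
qed




declare prog_nth[simp] prog_len[simp]

lemma prog_1[simp]: "prog ! Suc 0 = Add 1 1 0" by (simp add: prog_def)
lemma Suc_Suc_0[simp]: "Suc (Suc 0) = 2" by simp

locale alg = sys + fixes k :: nat assumes kl: "k < card E'"
begin

lemma cardE: "card E' \<le> n" using card_mono[OF _ sub] by simp

lemma npos: "0 < n" using kl cardE by simp
lemma kn: "k < n" using kl cardE by simp

abbreviation inp where "inp \<equiv> encode_input n idr E' k"

definition Dd where "Dd = k + 16 * n"
definition Bb where "Bb = k + 16 * n + 14"
definition WB where "WB = k + 18 * n + 28"
definition SB where "SB = k + 19 * n + 28"
definition flg where "flg y = (if y \<in> E' then 1 else (0::nat))"

lemma inp0: "inp 0 = n" and inp1: "inp 1 = k"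
  unfolding encode_input_def by simp_all

lemma inp_par: "y < n \<Longrightarrow> inp (2 + y) = par y"
  unfolding encode_input_def par_def by (simp add: Let_def)

lemma inp_flg: "y < n \<Longrightarrow> inp (2 + n + y) = flg y"
  unfolding encode_input_def flg_def by (simp add: Let_def)

lemma inp_zero: "2 + 2 * n \<le> a \<Longrightarrow> inp a = 0"
  unfolding encode_input_def by simp

lemma inp_in: "j < 2 * n \<Longrightarrow> inp (2 + j) = (if j < n then par j else flg (j - n))"
  using inp_par[of j] inp_flg[of "j - n"] by (cases "j < n") (simp_all add: add.assoc)

lemma blkA: "exN 16 (0, m) = (16, m(1 := m 1 + 16 * m 0))"
  by (simp add: step_def) (rule ext, simp)

definition mB :: "(nat \<Rightarrow> nat) \<Rightarrow> nat \<Rightarrow> nat \<Rightarrow> nat" where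
  "mB m D = m(D := m 2, 2 := 1, 1 := D+1, D+1 := m 3, 1 := D+2, D+2 := m 4,
     1 := D+3, D+3 := m 5, 1 := D+4, D+4 := m 6, 1 := D+5, D+5 := m 7, 1 := D+6, D+6 := m 8,
     1 := D+7, D+7 := m 9, 1 := D+8, D+8 := m 10, 1 := D+9, D+9 := m 11, 1 := D+10, D+10 := m 12,
     1 := D+11, D+11 := m 13, 1 := D+12, D+12 := m 14, 1 := D+13, D+13 := m 15, 1 := D + 14)"

lemma blkB: assumes "m 1 = Dx + 16"
  shows "exN 29 (16, m) = (45, mB m (Dx + 16))"
  using assms unfolding mB_def by (simp add: step_def)

lemma blkC: "exN 20 (45, m) = (65, m(3 := m 1 - 16 * m 0 - 14, 11 := 14, 4 := m 1))"
  by (simp add: step_def) (rule ext, simp)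

lemma lt14: "(j::nat) < 14 \<Longrightarrow> j = 0 \<or> j = 1 \<or> j = 2 \<or> j = 3 \<or> j = 4 \<or> j = 5 \<or> j = 6 \<or> j = 7 \<or>
  j = 8 \<or> j = 9 \<or> j = 10 \<or> j = 11 \<or> j = 12 \<or> j = 13" by presburger

lemma mB_facts:
  shows "mB m (Dx+16) 0 = m 0" "mB m (Dx+16) 1 = Dx + 30" "mB m (Dx+16) 2 = 1"
  unfolding mB_def by simp_all

lemma mB_in: "j < 14 \<Longrightarrow> mB m (Dx+16) (Dx + 16 + j) = m (2 + j)"
  by (drule lt14) (elim disjE; simp add: mB_def)

lemma mB_out: "16 \<le> a \<Longrightarrow> \<not> (Dx + 16 \<le> a \<and> a < Dx + 30) \<Longrightarrow> mB m (Dx+16) a = m a"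
  unfolding mB_def by auto

lemma leads_exN0: "P (exN N c) \<Longrightarrow> leads c P N"
  using leads_exN[of N c P 0] leads_done[of P] by simp

definition base_ok :: "(nat \<Rightarrow> nat) \<Rightarrow> bool" where
  "base_ok m \<longleftrightarrow> m 0 = n \<and> m 2 = 1 \<and> m 3 = k \<and> m 4 = Bb \<and> m 5 = Bb + n \<and> m 6 = WB \<and> m 7 = SB \<and>
     (\<forall>y<n. m (Bb + y) = par y \<and> m (Bb + n + y) = flg y)"

definition SA :: "(nat \<Rightarrow> nat) \<Rightarrow> bool" where
  "SA M \<longleftrightarrow> M 0 = n \<and> M 2 = 1 \<and> M 3 = k \<and> M 4 = Bb \<and> (\<forall>j<14. M (Dd + j) = inp (2 + j)) \<and>
     (\<forall>j. 14 \<le> j \<and> j < 2 * n \<longrightarrow> M (Bb + j) = inp (2 + j)) \<and> (\<forall>a\<ge>WB. M a = 0)"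

lemma Bb_Dd: "Bb = Dd + 14" unfolding Bb_def Dd_def by simp
lemma WB_Bb: "WB = Bb + 2 * n + 14" unfolding Bb_def WB_def by simp
lemma SB_WB: "SB = WB + n" unfolding SB_def WB_def by simp
lemma Dd_ge: "16 \<le> Dd" unfolding Dd_def using npos by simp

lemma tail1:
  assumes "SA M"
  shows "leads (77, M) (\<lambda>c. fst c = 96 \<and> base_ok (snd c) \<and> snd c 8 = 0 \<and> (\<forall>a\<ge>WB. snd c a = 0)) (5 + (8*14+1 + 6))"
proof -
  obtain Dx where Dx: "Dd = Dx + 16" using Dd_ge by (metis le_add_diff_inverse2)
  have B: "Bb = Dx + 30" using Dx Bb_Dd by simp
  have W: "WB = Dx + 30 + 2 * n + 14" using B WB_Bb by simp
  have SAf: "M 0 = n" "M 2 = 1" "M 3 = k" "M 4 = Dx + 30" "\<forall>j<14. M (Dx + 16 + j) = inp (2 + j)"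
     "\<forall>j. 14 \<le> j \<and> j < 2 * n \<longrightarrow> M (Dx + 30 + j) = inp (2 + j)" "\<forall>a\<ge>Dx + 30 + 2 * n + 14. M a = 0"
    using assms unfolding SA_def Dx B W by auto
  define M2 where "M2 = M(8 := Dx + 30, 11 := 14, 9 := Dx + 16, 10 := 14)"
  have e: "exN 5 (77, M) = (82, M2)" unfolding M2_def using SAf(4) by (simp add: step_def) (simp add: add.commute)
  have loopB: "leads (82, M2) (\<lambda>c'. fst c' = 82+8 \<and> (\<forall>i<14. snd c' (Dx + 30 + i) = M2 (Dx + 16 + i)) \<and>
       (\<forall>a. a \<noteq> 8 \<and> a \<noteq> 9 \<and> a \<noteq> 11 \<and> a \<noteq> 10 \<and> (\<forall>i<14. a \<noteq> Dx + 30 + i) \<longrightarrow> snd c' a = M2 a)) (8*14+1)"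
    by (rule copy_loop[where L=82 and d=8 and s=9 and t=11 and cnt=10]) (auto simp: M2_def)
  have "leads (82, M2) (\<lambda>c. fst c = 96 \<and> base_ok (snd c) \<and> snd c 8 = 0 \<and> (\<forall>a\<ge>WB. snd c a = 0)) (8*14+1 + 6)"
  proof (rule leads_seq[OF loopB])
    fix c' :: config assume a: "fst c' = 82+8 \<and> (\<forall>i<14. snd c' (Dx + 30 + i) = M2 (Dx + 16 + i)) \<and>
       (\<forall>a. a \<noteq> 8 \<and> a \<noteq> 9 \<and> a \<noteq> 11 \<and> a \<noteq> 10 \<and> (\<forall>i<14. a \<noteq> Dx + 30 + i) \<longrightarrow> snd c' a = M2 a)"
    obtain M3 where c': "c' = (90, M3)" using a by (cases c') auto
    have r: "M3 0 = n" "M3 2 = 1" "M3 3 = k" "M3 4 = Dx + 30"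
      using a SAf unfolding c' M2_def by (auto simp: add.commute)
    have arr: "\<forall>j<2 * n. M3 (Dx + 30 + j) = inp (2 + j)"
    proof (intro allI impI)
      fix j assume j: "j < 2 * n"
      show "M3 (Dx + 30 + j) = inp (2 + j)"
      proof (cases "j < 14")
        case True
        then have "M3 (Dx + 30 + j) = M2 (Dx + 16 + j)" using a c' by auto
        also have "\<dots> = M (Dx + 16 + j)" unfolding M2_def by simp
        finally show ?thesis using SAf(5) True by simp
      next
        case False
        have "\<forall>i<14. Dx + 30 + j \<noteq> Dx + 30 + i" using False by auto
        then have "M3 (Dx + 30 + j) = M2 (Dx + 30 + j)" using a c' by auto
        also have "\<dots> = M (Dx + 30 + j)" unfolding M2_def by simp
        finally show ?thesis using SAf(6) False j by simp
      qed
    qed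
    have z: "\<forall>a\<ge>Dx + 30 + 2 * n + 14. M3 a = 0"
    proof (intro allI impI)
      fix x assume x: "Dx + 30 + 2 * n + 14 \<le> x"
      then have "\<forall>i<14. x \<noteq> Dx + 30 + i" by auto
      then have "M3 x = M2 x" using a c' x by auto
      also have "\<dots> = M x" unfolding M2_def using x by simp
      finally show "M3 x = 0" using SAf(7) x by simp
    qed
    define M4 where "M4 = M3(5 := Dx + 30 + n, 6 := Dx + 30 + n + n, 11 := 14, 6 := Dx + 30 + n + n + 14,
      7 := Dx + 30 + n + n + 14 + n, 8 := 0)"
    have e2: "exN 6 (90, M3) = (96, M4)" unfolding M4_def using r by (simp add: step_def)
    have "fst (96::nat, M4) = 96 \<and> base_ok M4 \<and> M4 8 = 0 \<and> (\<forall>a\<ge>WB. M4 a = 0)"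
    proof (intro conjI)
      show "base_ok M4" unfolding base_ok_def
      proof (intro conjI allI impI)
        show "M4 0 = n" "M4 2 = 1" "M4 3 = k" "M4 4 = Bb" "M4 5 = Bb + n" "M4 6 = WB" "M4 7 = SB"
          unfolding M4_def using r B W SB_WB by simp_all
      next
        fix y assume y: "y < n"
        have "M4 (Bb + y) = M3 (Dx + 30 + y)" unfolding M4_def B by simp
        also have "\<dots> = inp (2 + y)" using arr y by simp
        finally show "M4 (Bb + y) = par y" using inp_par y by simp
        have "M4 (Bb + n + y) = M3 (Dx + 30 + (n + y))" unfolding M4_def B by (simp add: add.assoc)
        also have "\<dots> = inp (2 + (n + y))" using arr y by simp
        finally show "M4 (Bb + n + y) = flg y" using inp_flg y by (simp add: add.assoc)
      qed
    next
      show "\<forall>a\<ge>WB. M4 a = 0" unfolding M4_def W using z by auto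
    qed (simp_all add: M4_def)
    then show "leads c' (\<lambda>c. fst c = 96 \<and> base_ok (snd c) \<and> snd c 8 = 0 \<and> (\<forall>a\<ge>WB. snd c a = 0)) 6"
      unfolding c' by (intro leads_exN0) (simp only: e2 fst_conv snd_conv, blast)
  qed
  note L = this
  show ?thesis by (rule leads_exN[of 5 "(77, M)", unfolded e, OF L])
qed

lemma head:
  "leads (0, inp) (\<lambda>c. fst c = 77 \<and> SA (snd c)) (16 + (29 + (20 + (4 + (8 * (n + n - 14) + 1)))))"
proof -
  obtain n' where n': "n = Suc n'" using npos by (cases n) auto
  define Dx where "Dx = k + 16 * n'"
  have DdDx: "Dd = Dx + 16" "Bb = Dx + 30" "WB = Dx + 30 + 2 * n + 14"
    unfolding Dd_def Bb_def WB_def Dx_def using n' by simp_all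
  define m1 where "m1 = inp(1 := k + 16 * n)"
  have e1: "exN 16 (0, inp) = (16, m1)" using blkA[of inp] inp0 inp1 unfolding m1_def by simp
  have m1_1: "m1 1 = Dx + 16" unfolding m1_def Dx_def n' by simp
  have e2: "exN 29 (16, m1) = (45, mB m1 (Dx+16))" by (rule blkB[of m1 Dx, OF m1_1])
  define MB where "MB = mB m1 (Dx+16)"
  have MB0: "MB 0 = n" "MB 1 = Dx + 30" "MB 2 = 1" unfolding MB_def mB_facts m1_def using inp0 by simp_all
  define M0 where "M0 = MB(3 := k, 11 := 14, 4 := Dx + 30)"
  have e3: "exN 20 (45, MB) = (65, M0)" unfolding M0_def using blkC[of MB] MB0 unfolding Dx_def n' by simp
  define M1 where "M1 = M0(8 := Dx + 44, 9 := 16, 10 := n + n - 14)"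
  have e4: "exN 4 (65, M0) = (69, M1)" unfolding M1_def M0_def using MB0 by (simp add: step_def) (simp add: add.commute)
  have loopA: "leads (69, M1) (\<lambda>c'. fst c' = 69+8 \<and> (\<forall>i<n + n - 14. snd c' (Dx + 44 + i) = M1 (16 + i)) \<and>
       (\<forall>a. a \<noteq> 8 \<and> a \<noteq> 9 \<and> a \<noteq> 11 \<and> a \<noteq> 10 \<and> (\<forall>i<n + n - 14. a \<noteq> Dx + 44 + i) \<longrightarrow> snd c' a = M1 a))
       (8 * (n + n - 14) + 1)"
  proof (rule copy_loop[where L=69 and d=8 and s=9 and t=11 and cnt=10])
    show "\<forall>i<n + n - 14. \<forall>j<n + n - 14. Dx + 44 + i \<noteq> 16 + j" unfolding Dx_def n' by auto
  qed (auto simp: M1_def)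
  have "leads (69, M1) (\<lambda>c. fst c = 77 \<and> SA (snd c)) (8 * (n + n - 14) + 1)"
  proof (rule leads_mono[OF loopA order.refl])
    fix c :: config assume a: "fst c = 69+8 \<and> (\<forall>i<n + n - 14. snd c (Dx + 44 + i) = M1 (16 + i)) \<and>
       (\<forall>a. a \<noteq> 8 \<and> a \<noteq> 9 \<and> a \<noteq> 11 \<and> a \<noteq> 10 \<and> (\<forall>i<n + n - 14. a \<noteq> Dx + 44 + i) \<longrightarrow> snd c a = M1 a)"
    define M where "M = snd c"
    have fr: "\<And>x. x \<noteq> 8 \<Longrightarrow> x \<noteq> 9 \<Longrightarrow> x \<noteq> 11 \<Longrightarrow> x \<noteq> 10 \<Longrightarrow> (x < Dx + 44 \<or> Dx + 30 + n + n \<le> x) \<Longrightarrow> M x = M1 x"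
    proof -
      fix x assume x: "x \<noteq> 8" "x \<noteq> 9" "x \<noteq> 11" "x \<noteq> 10" "x < Dx + 44 \<or> Dx + 30 + n + n \<le> x"
      have "\<forall>i<n + n - 14. x \<noteq> Dx + 44 + i" using x(5) by auto
      then show "M x = M1 x" using a x unfolding M_def by auto
    qed
    have "SA M" unfolding SA_def
    proof (intro conjI allI impI)
      show "M 0 = n" "M 2 = 1" "M 3 = k" "M 4 = Bb"
        using fr[of 0] fr[of 2] fr[of 3] fr[of 4] MB0 unfolding M1_def M0_def DdDx by simp_all
    next
      fix j :: nat assume j: "j < 14"
      have "M (Dd + j) = M1 (Dx + 16 + j)" using fr[of "Dx + 16 + j"] j unfolding DdDx by simp
      also have "\<dots> = MB (Dx + 16 + j)" unfolding M1_def M0_def by simp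
      also have "\<dots> = m1 (2 + j)" unfolding MB_def by (rule mB_in[OF j])
      also have "\<dots> = inp (2 + j)" unfolding m1_def by simp
      finally show "M (Dd + j) = inp (2 + j)" .
    next
      fix j :: nat assume j: "14 \<le> j \<and> j < 2 * n"
      then have "j - 14 < n + n - 14" by linarith
      then have "M (Dx + 44 + (j - 14)) = M1 (16 + (j - 14))" using a unfolding M_def by blast
      moreover have "Dx + 44 + (j - 14) = Bb + j" "16 + (j - 14) = 2 + j" using j DdDx by simp_all
      ultimately have "M (Bb + j) = M1 (2 + j)" by simp
      also have "\<dots> = MB (2 + j)" unfolding M1_def M0_def using j by simp
      also have "\<dots> = m1 (2 + j)" unfolding MB_def
        by (rule mB_out) (use j in \<open>auto simp: Dx_def n'\<close>)
      also have "\<dots> = inp (2 + j)" unfolding m1_def by simp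
      finally show "M (Bb + j) = inp (2 + j)" .
    next
      fix x :: nat assume x: "WB \<le> x"
      have "M x = M1 x" using fr[of x] x unfolding DdDx by simp
      also have "\<dots> = MB x" unfolding M1_def M0_def using x unfolding DdDx by simp
      also have "\<dots> = m1 x" unfolding MB_def by (rule mB_out) (use x DdDx in auto)
      also have "\<dots> = inp x" unfolding m1_def using x DdDx by simp
      also have "\<dots> = 0" by (rule inp_zero) (use x DdDx in auto)
      finally show "M x = 0" .
    qed
    then show "fst c = 77 \<and> SA (snd c)" using a unfolding M_def by simp
  qed
  then have "leads (exN 4 (65, M0)) (\<lambda>c. fst c = 77 \<and> SA (snd c)) (8 * (n + n - 14) + 1)" using e4 by simp
  then have "leads (65, M0) (\<lambda>c. fst c = 77 \<and> SA (snd c)) (4 + (8 * (n + n - 14) + 1))" by (rule leads_exN)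
  then have "leads (exN 20 (45, MB)) (\<lambda>c. fst c = 77 \<and> SA (snd c)) (4 + (8 * (n + n - 14) + 1))" using e3 by simp
  then have "leads (45, MB) (\<lambda>c. fst c = 77 \<and> SA (snd c)) (20 + (4 + (8 * (n + n - 14) + 1)))" by (rule leads_exN)
  then have "leads (exN 29 (16, m1)) (\<lambda>c. fst c = 77 \<and> SA (snd c)) (20 + (4 + (8 * (n + n - 14) + 1)))"
    using e2 unfolding MB_def by simp
  then have "leads (16, m1) (\<lambda>c. fst c = 77 \<and> SA (snd c)) (29 + (20 + (4 + (8 * (n + n - 14) + 1))))" by (rule leads_exN)
  then have "leads (exN 16 (0, inp)) (\<lambda>c. fst c = 77 \<and> SA (snd c)) (29 + (20 + (4 + (8 * (n + n - 14) + 1))))"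
    using e1 by simp
  then show ?thesis by (rule leads_exN)
qed

definition Bx where "Bx = k + 16 * n - 2"
lemma Bb_eq: "Bb = Bx + 16" unfolding Bb_def Bx_def using npos by simp
lemma WB_eq: "WB = Bx + 30 + 2 * n" unfolding WB_def Bx_def using npos by simp
lemma SB_eq: "SB = Bx + 30 + 3 * n" unfolding SB_def Bx_def using npos by simp

lemma base_ok_upd[simp]: assumes a: "8 \<le> a \<and> a < 16 \<or> WB \<le> a"
  shows "base_ok (m(a := v)) = base_ok m"
proof -
  have r: "a \<noteq> 0" "a \<noteq> 2" "a \<noteq> 3" "a \<noteq> 4" "a \<noteq> 5" "a \<noteq> 6" "a \<noteq> 7" using a WB_eq by auto
  have q: "\<forall>y<n. Bb + y \<noteq> a \<and> Bb + n + y \<noteq> a" using a unfolding WB_eq Bb_eq by auto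
  have "(\<forall>y<n. (m(a := v)) (Bb + y) = par y \<and> (m(a := v)) (Bb + n + y) = flg y) =
        (\<forall>y<n. m (Bb + y) = par y \<and> m (Bb + n + y) = flg y)" using q by simp
  then show ?thesis unfolding base_ok_def using r by simp
qed

definition zero where "zero m \<longleftrightarrow> (\<forall>a\<ge>SB. m a = 0)"
lemma zero_upd[simp]: "a < SB \<Longrightarrow> zero (m(a := v)) = zero m"
  unfolding zero_def by auto

definition cntw where "cntw x y = card {x'. x' < x \<and> walk n x' = Some y}"
definition wok where "wok m x \<longleftrightarrow> (\<forall>y<n. m (WB + y) = cntw x y)"
lemma wok_upd[simp]: "a < WB \<Longrightarrow> wok (m(a := v)) x = wok m x"
  unfolding wok_def by auto

lemma wok_upd2[simp]: "a < WB \<Longrightarrow> wok (m(a := v, b := w)) x = wok (m(b := w)) x"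
  unfolding wok_def by auto

lemma cntw_Suc: "cntw (Suc x) y = cntw x y + (if walk n x = Some y then 1 else 0)"
proof -
  have "{x'. x' < Suc x \<and> walk n x' = Some y} = {x'. x' < x \<and> walk n x' = Some y} \<union>
     (if walk n x = Some y then {x} else {})" by (auto simp: less_Suc_eq)
  moreover have "finite {x'. x' < x \<and> walk n x' = Some y}" by simp
  ultimately show ?thesis unfolding cntw_def by (auto simp: card_insert_if)
qed

lemma cntw_0: "cntw 0 y = 0" unfolding cntw_def by simp

lemma walk_flag: "y \<in> E' \<Longrightarrow> walk s y = Some y" by (cases s) auto

lemma wok_inc: assumes "wok m x" "walk n x = Some y" "y < n"
  shows "wok (m(WB + y := Suc (m (WB + y)))) (Suc x)"
  using assms unfolding wok_def by (auto simp: cntw_Suc)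

lemma wok_same: assumes "wok m x" "walk n x = None"
  shows "wok m (Suc x)"
  using assms unfolding wok_def by (auto simp: cntw_Suc)

lemma base_vals: "base_ok m \<Longrightarrow> m 0 = n \<and> m 2 = 1 \<and> m 3 = k \<and> m 4 = Bx + 16 \<and> m 5 = Bx + 16 + n \<and>
   m 6 = Bx + 30 + 2 * n \<and> m 7 = Bx + 30 + 3 * n"
  unfolding base_ok_def Bb_eq WB_eq SB_eq by simp

lemma base_arr: "base_ok m \<Longrightarrow> y < n \<Longrightarrow> m (Bx + 16 + y) = par y \<and> m (Bx + 16 + n + y) = flg y"
  unfolding base_ok_def Bb_eq by simp

lemma walkloop:
  "base_ok m \<Longrightarrow> m 8 = x \<Longrightarrow> wok m x \<Longrightarrow> zero m \<Longrightarrow> m 9 = y \<Longrightarrow> m 10 = s \<Longrightarrow> y < n \<Longrightarrow>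
   walk s y = walk n x \<Longrightarrow>
   leads (100, m) (\<lambda>c. fst c = 115 \<and> base_ok (snd c) \<and> snd c 8 = x \<and> wok (snd c) (Suc x) \<and> zero (snd c))
     (10 * s + 8)"
proof (induction s arbitrary: y m)
  case 0
  note bv = base_vals[OF 0(1)] and ba = base_arr[OF 0(1) 0(7)]
  show ?case
  proof (cases "y \<in> E'")
    case True
    have wx: "walk n x = Some y" using 0(8) True by simp
    have "(\<lambda>c. fst c = 115 \<and> base_ok (snd c) \<and> snd c 8 = x \<and> wok (snd c) (Suc x) \<and> zero (snd c)) (exN 8 (100, m))"
        using bv ba True 0 wok_inc[OF 0(3) wx 0(7)]
        by (simp add: step_def flg_def WB_eq SB_eq)
      then show ?thesis by (rule leads_mono[OF leads_exN0]) simp_all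
  next
    case False
    have wx: "walk n x = None" using 0(8) False by simp
    have "(\<lambda>c. fst c = 115 \<and> base_ok (snd c) \<and> snd c 8 = x \<and> wok (snd c) (Suc x) \<and> zero (snd c)) (exN 4 (100, m))"
        using bv ba False 0 wok_same[OF 0(3) wx]
        by (simp add: step_def flg_def WB_eq SB_eq)
      then show ?thesis by (rule leads_mono[OF leads_exN0]) simp_all
  qed
next
  case (Suc s)
  note bv = base_vals[OF Suc(2)] and ba = base_arr[OF Suc(2) Suc(8)]
  show ?case
  proof (cases "y \<in> E'")
    case True
    have wx: "walk n x = Some y" using Suc(9) True by (simp del: walk.simps add: walk_flag)
    have "(\<lambda>c. fst c = 115 \<and> base_ok (snd c) \<and> snd c 8 = x \<and> wok (snd c) (Suc x) \<and> zero (snd c)) (exN 8 (100, m))"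
        using bv ba True Suc.prems wok_inc[OF Suc(4) wx Suc(8)]
        by (simp add: step_def flg_def WB_eq SB_eq)
      then show ?thesis by (rule leads_mono[OF leads_exN0]) simp_all
  next
    case False
    show ?thesis
    proof (cases "par y = 0")
      case True
      have wx: "walk n x = None" using Suc(9) False True by simp
      have "(\<lambda>c. fst c = 115 \<and> base_ok (snd c) \<and> snd c 8 = x \<and> wok (snd c) (Suc x) \<and> zero (snd c)) (exN 7 (100, m))"
          using bv ba False True Suc.prems wok_same[OF Suc(4) wx]
          by (simp add: step_def flg_def WB_eq SB_eq)
        then show ?thesis by (rule leads_mono[OF leads_exN0]) simp_all
    next
      case pz: False
      have pl: "par y - 1 < n" using par_pos[OF pz] by simp
      define m' where "m' = m(12 := Bx + 16 + y, 11 := par y, 9 := par y - 1, 10 := s)"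
      have e: "exN 10 (100, m) = (100, m')"
        using bv ba False pz Suc.prems unfolding m'_def by (simp add: step_def flg_def)
      have IH: "leads (100, m') (\<lambda>c. fst c = 115 \<and> base_ok (snd c) \<and> snd c 8 = x \<and> wok (snd c) (Suc x) \<and> zero (snd c))
          (10 * s + 8)"
      proof (rule Suc.IH)
        show "base_ok m'" "wok m' x" "zero m'" unfolding m'_def using Suc.prems
          by (simp_all add: WB_eq SB_eq)
        show "m' 8 = x" "m' 9 = par y - 1" "m' 10 = s" unfolding m'_def using Suc.prems by simp_all
        show "par y - 1 < n" by (rule pl)
        show "walk s (par y - 1) = walk n x" using Suc.prems(8) False pz by simp
      qed
      have "leads (100, m) (\<lambda>c. fst c = 115 \<and> base_ok (snd c) \<and> snd c 8 = x \<and> wok (snd c) (Suc x) \<and> zero (snd c))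
          (10 + (10 * s + 8))" by (rule leads_exN[of 10 "(100, m)", unfolded e, OF IH])
      then show ?thesis by simp
    qed
  qed
qed

lemma outer:
  "n - x = d \<Longrightarrow> x < n \<Longrightarrow> base_ok m \<Longrightarrow> m 8 = x \<Longrightarrow> wok m x \<Longrightarrow> zero m \<Longrightarrow>
   leads (96, m) (\<lambda>c. fst c = 119 \<and> base_ok (snd c) \<and> wok (snd c) n \<and> zero (snd c)) (d * (10 * n + 16))"
proof (induction d arbitrary: x m)
  case 0 then show ?case by simp
next
  case (Suc d)
  note bv = base_vals[OF Suc(4)]
  have e1: "exN 4 (96, m) = (100, m(9 := x, 10 := n))" using bv Suc.prems by (simp add: step_def)
  have W: "leads (100, m(9 := x, 10 := n))
     (\<lambda>c. fst c = 115 \<and> base_ok (snd c) \<and> snd c 8 = x \<and> wok (snd c) (Suc x) \<and> zero (snd c)) (10 * n + 8)"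
    by (rule walkloop) (use Suc.prems in \<open>simp_all add: WB_eq SB_eq\<close>)
  have C: "leads c (\<lambda>c. fst c = 119 \<and> base_ok (snd c) \<and> wok (snd c) n \<and> zero (snd c)) (4 + d * (10 * n + 16))"
    if q: "fst c = 115 \<and> base_ok (snd c) \<and> snd c 8 = x \<and> wok (snd c) (Suc x) \<and> zero (snd c)" for c
  proof -
    obtain M where c: "c = (115, M)" using q by (cases c) auto
    have q': "base_ok M" "M 8 = x" "wok M (Suc x)" "zero M" using q c by auto
    note bv' = base_vals[OF q'(1)]
    show ?thesis
    proof (cases "Suc x = n")
      case True
      have "(\<lambda>c. fst c = 119 \<and> base_ok (snd c) \<and> wok (snd c) n \<and> zero (snd c)) (exN 3 (115, M))"
        using bv' q' True by (simp add: step_def WB_eq SB_eq)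
      then have "leads (115, M) (\<lambda>c. fst c = 119 \<and> base_ok (snd c) \<and> wok (snd c) n \<and> zero (snd c)) 3"
        by (rule leads_exN0)
      then show ?thesis unfolding c by (rule leads_mono) simp_all
    next
      case False
      have e: "exN 4 (115, M) = (96, M(8 := Suc x, 11 := n - Suc x))" using bv' q' False Suc.prems(2)
        by (simp add: step_def)
      have IH: "leads (96, M(8 := Suc x, 11 := n - Suc x)) (\<lambda>c. fst c = 119 \<and> base_ok (snd c) \<and> wok (snd c) n \<and> zero (snd c))
          (d * (10 * n + 16))"
      proof (rule Suc.IH)
        have w: "11 < WB" "8 < WB" "11 < SB" "8 < SB" unfolding WB_eq SB_eq by simp_all
        show "base_ok (M(8 := Suc x, 11 := n - Suc x))" using q'(1) by simp
        show "wok (M(8 := Suc x, 11 := n - Suc x)) (Suc x)" using q'(3) w by simp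
        show "zero (M(8 := Suc x, 11 := n - Suc x))" using q'(4) w by simp
      qed (use Suc.prems False in auto)
      show ?thesis unfolding c by (rule leads_exN[of 4 "(115, M)", unfolded e, OF IH])
    qed
  qed
  have "leads (100, m(9 := x, 10 := n)) (\<lambda>c. fst c = 119 \<and> base_ok (snd c) \<and> wok (snd c) n \<and> zero (snd c))
     ((10 * n + 8) + (4 + d * (10 * n + 16)))" by (rule leads_seq[OF W C])
  then have "leads (96, m) (\<lambda>c. fst c = 119 \<and> base_ok (snd c) \<and> wok (snd c) n \<and> zero (snd c))
     (4 + ((10 * n + 8) + (4 + d * (10 * n + 16))))" by (rule leads_exN[of 4 "(96, m)", unfolded e1])
  then show ?case by (rule leads_mono) simp_all
qed

lemma base_ok_frame: "base_ok m \<Longrightarrow> (\<forall>a. a < 10 \<or> 15 < a \<longrightarrow> M a = m a) \<Longrightarrow> base_ok M"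
  unfolding base_ok_def Bb_eq by auto

lemma scan:
  "n - i = d \<Longrightarrow> i < n \<Longrightarrow> m 0 = n \<Longrightarrow> m 2 = 1 \<Longrightarrow> m 6 = WB \<Longrightarrow> m 15 = i \<Longrightarrow> m 13 < n \<Longrightarrow>
   (\<forall>j<i. m (WB + j) \<le> m 14) \<Longrightarrow> (m 14 = 0 \<or> m (WB + m 13) = m 14) \<Longrightarrow>
   leads (125, m) (\<lambda>c. fst c = 137 \<and> (\<forall>a. a < 10 \<or> 15 < a \<longrightarrow> snd c a = m a) \<and> snd c 13 < n \<and>
      (\<forall>j<n. m (WB + j) \<le> snd c 14) \<and> (snd c 14 = 0 \<or> m (WB + snd c 13) = snd c 14)) (d * 12)"
proof (induction d arbitrary: i m)
  case 0 then show ?case by simp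
next
  case (Suc d)
  have wb: "WB = Bx + 30 + 2 * n" by (rule WB_eq)
  let ?v = "m (WB + i)"
  define bi where "bi = (if ?v \<le> m 14 then m 13 else i)"
  define bv where "bv = (if ?v \<le> m 14 then m 14 else ?v)"
  define M where "M = m(12 := WB + i, 11 := ?v, 10 := ?v - m 14, 13 := bi, 14 := bv, 15 := Suc i, 10 := n - Suc i)"
  have pM: "\<forall>a. a < 10 \<or> 15 < a \<longrightarrow> M a = m a" unfolding M_def by auto
  have M13: "M 13 = bi" "M 14 = bv" "M 15 = Suc i" "M 0 = n" "M 2 = 1" "M 6 = WB"
    unfolding M_def using Suc.prems by simp_all
  have bil: "bi < n" unfolding bi_def using Suc.prems by simp
  have inv1: "\<forall>j<Suc i. m (WB + j) \<le> bv" unfolding bv_def using Suc.prems(8) by (auto simp: less_Suc_eq)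
  have inv2: "bv = 0 \<or> m (WB + bi) = bv" unfolding bv_def bi_def using Suc.prems(9) by auto
  have ex: "\<exists>N. N \<le> 12 \<and> exN N (125, m) = (if Suc i = n then 137 else 125, M)"
  proof (cases "?v \<le> m 14")
    case True
    then have "?v - m 14 = 0" by simp
    show ?thesis
    proof (cases "Suc i = n")
      case T2: True
      have "exN 7 (125, m) = (137, M)" using Suc.prems True T2 \<open>?v - m 14 = 0\<close>
        unfolding M_def bi_def bv_def wb by (simp add: step_def fun_eq_iff)
      then show ?thesis using T2 by (intro exI[of _ 7]) simp
    next
      case F2: False
      have "exN 8 (125, m) = (125, M)" using Suc.prems True F2 \<open>?v - m 14 = 0\<close>
        unfolding M_def bi_def bv_def wb by (simp add: step_def fun_eq_iff)
      then show ?thesis using F2 by (intro exI[of _ 8]) simp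
    qed
  next
    case False
    then have "?v - m 14 \<noteq> 0" by simp
    show ?thesis
    proof (cases "Suc i = n")
      case T2: True
      have "exN 11 (125, m) = (137, M)" using Suc.prems False T2 \<open>?v - m 14 \<noteq> 0\<close>
        unfolding M_def bi_def bv_def wb by (simp add: step_def fun_eq_iff)
      then show ?thesis using T2 by (intro exI[of _ 11]) simp
    next
      case F2: False
      have "exN 12 (125, m) = (125, M)" using Suc.prems False F2 \<open>?v - m 14 \<noteq> 0\<close>
        unfolding M_def bi_def bv_def wb by (simp add: step_def fun_eq_iff)
      then show ?thesis using F2 by (intro exI[of _ 12]) simp
    qed
  qed
  then obtain N where N: "N \<le> 12" "exN N (125, m) = (if Suc i = n then 137 else 125, M)" by blast
  have "leads (if Suc i = n then 137 else 125, M) (\<lambda>c. fst c = 137 \<and> (\<forall>a. a < 10 \<or> 15 < a \<longrightarrow> snd c a = m a) \<and> snd c 13 < n \<and>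
      (\<forall>j<n. m (WB + j) \<le> snd c 14) \<and> (snd c 14 = 0 \<or> m (WB + snd c 13) = snd c 14)) (d * 12)"
  proof (cases "Suc i = n")
    case True
    show ?thesis using True pM M13 bil inv1 inv2 by (intro leads_done) (simp add: pM[rule_format])
  next
    case False
    have IH: "leads (125, M) (\<lambda>c. fst c = 137 \<and> (\<forall>a. a < 10 \<or> 15 < a \<longrightarrow> snd c a = M a) \<and> snd c 13 < n \<and>
      (\<forall>j<n. M (WB + j) \<le> snd c 14) \<and> (snd c 14 = 0 \<or> M (WB + snd c 13) = snd c 14)) (d * 12)"
    proof (rule Suc.IH)
      show "n - Suc i = d" "Suc i < n" using Suc.prems False by auto
      have "\<And>j. M (WB + j) = m (WB + j)" using pM unfolding wb by simp
      then show "\<forall>j<Suc i. M (WB + j) \<le> M 14" "M 14 = 0 \<or> M (WB + M 13) = M 14"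
        using inv1 inv2 M13 by auto
    qed (use M13 bil in auto)
    have "\<And>j. M (WB + j) = m (WB + j)" using pM unfolding wb by simp
    then show ?thesis using False IH pM by (auto elim!: leads_mono)
  qed
  then have "leads (exN N (125, m)) (\<lambda>c. fst c = 137 \<and> (\<forall>a. a < 10 \<or> 15 < a \<longrightarrow> snd c a = m a) \<and> snd c 13 < n \<and>
      (\<forall>j<n. m (WB + j) \<le> snd c 14) \<and> (snd c 14 = 0 \<or> m (WB + snd c 13) = snd c 14)) (d * 12)" using N by simp
  then have "leads (125, m) (\<lambda>c. fst c = 137 \<and> (\<forall>a. a < 10 \<or> 15 < a \<longrightarrow> snd c a = m a) \<and> snd c 13 < n \<and>
      (\<forall>j<n. m (WB + j) \<le> snd c 14) \<and> (snd c 14 = 0 \<or> m (WB + snd c 13) = snd c 14)) (N + d * 12)"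
    by (rule leads_exN)
  then show ?case by (rule leads_mono) (use N in auto)
qed

definition inv3 :: "(nat \<Rightarrow> nat) \<Rightarrow> nat \<Rightarrow> nat set \<Rightarrow> bool" where
  "inv3 m r T \<longleftrightarrow> base_ok m \<and> m 8 = r \<and> T \<subseteq> E' \<and> card T + r = k \<and>
     (\<forall>i<n. m (WB + i) = (if i \<in> T then 0 else wt i)) \<and> (\<forall>i<n. m (SB + i) = (if i \<in> T then 1 else 0)) \<and>
     (\<forall>a\<in>T. \<forall>b<n. b \<notin> T \<longrightarrow> wt b \<le> wt a)"

lemma finE: "finite E'" using sub finite_subset by blast

lemma rounds: "inv3 m r T \<Longrightarrow> leads (121, m) (\<lambda>c. fst c = 144 \<and> (\<exists>T. inv3 (snd c) 0 T)) (r * (12 * n + 11) + 1)"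
proof (induction r arbitrary: m T)
  case 0
  have "(\<lambda>c. fst c = 144 \<and> (\<exists>T. inv3 (snd c) 0 T)) (exN 1 (121, m))"
    using 0 unfolding inv3_def by (auto simp: step_def)
  then show ?case by (rule leads_mono[OF leads_exN0]) simp_all
next
  case (Suc r)
  have I: "base_ok m" "m 8 = Suc r" "T \<subseteq> E'" "card T + Suc r = k"
     "\<forall>i<n. m (WB + i) = (if i \<in> T then 0 else wt i)" "\<forall>i<n. m (SB + i) = (if i \<in> T then 1 else 0)"
     "\<forall>a\<in>T. \<forall>b<n. b \<notin> T \<longrightarrow> wt b \<le> wt a" using Suc.prems unfolding inv3_def by auto
  note bv = base_vals[OF I(1)]
  define m1 where "m1 = m(13 := 0, 14 := 0, 15 := 0)"
  have e1: "exN 4 (121, m) = (125, m1)" unfolding m1_def using I(2) by (simp add: step_def)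
  have S: "leads (125, m1) (\<lambda>c. fst c = 137 \<and> (\<forall>a. a < 10 \<or> 15 < a \<longrightarrow> snd c a = m1 a) \<and> snd c 13 < n \<and>
      (\<forall>j<n. m1 (WB + j) \<le> snd c 14) \<and> (snd c 14 = 0 \<or> m1 (WB + snd c 13) = snd c 14)) (n * 12)"
    by (rule scan[where i=0]) (use npos bv in \<open>auto simp: m1_def WB_eq\<close>)
  have C: "leads c (\<lambda>c. fst c = 144 \<and> (\<exists>T. inv3 (snd c) 0 T)) (7 + (r * (12 * n + 11) + 1))"
    if q: "fst c = 137 \<and> (\<forall>a. a < 10 \<or> 15 < a \<longrightarrow> snd c a = m1 a) \<and> snd c 13 < n \<and>
      (\<forall>j<n. m1 (WB + j) \<le> snd c 14) \<and> (snd c 14 = 0 \<or> m1 (WB + snd c 13) = snd c 14)" for c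
  proof -
    obtain M where c: "c = (137, M)" using q by (cases c) auto
    define bi where "bi = M 13"
    define bv where "bv = M 14"
    have fr: "\<And>a. a < 10 \<or> 15 < a \<Longrightarrow> M a = m a" using q unfolding c m1_def by auto
    have m1w: "\<And>j. m1 (WB + j) = m (WB + j)" unfolding m1_def WB_eq by simp
    have bil: "bi < n" using q unfolding c bi_def by simp
    have top: "\<forall>j<n. m (WB + j) \<le> bv" and alt: "bv = 0 \<or> m (WB + bi) = bv"
      using q m1w unfolding c bi_def bv_def by auto
    have "card T < card E'" using I(4) kl by linarith
    have finT: "finite T" using I(3) finE finite_subset by blast
    have "\<not> E' \<subseteq> T" using card_mono[OF finT] \<open>card T < card E'\<close> by (meson not_le)
    then obtain e where e: "e \<in> E'" "e \<notin> T" by auto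
    have el: "e < n" using e sub by auto
    have "1 \<le> wt e" by (rule wt_pos[OF e(1)])
    also have "wt e = m (WB + e)" using I(5) e el by simp
    also have "\<dots> \<le> bv" using top el by simp
    finally have bvpos: "1 \<le> bv" .
    then have mbi: "m (WB + bi) = bv" using alt by simp
    have biT: "bi \<notin> T" using mbi bvpos I(5) bil by auto
    have wbi: "wt bi = bv" using mbi I(5) bil biT by simp
    have biE: "bi \<in> E'" using wbi bvpos wt_zero by fastforce
    define M' where "M' = M(12 := WB + bi, 11 := 0, WB + bi := 0, 12 := SB + bi, SB + bi := 1, 8 := r)"
    have bM: "base_ok M" by (rule base_ok_frame[OF I(1)]) (use fr in auto)
    note bvM = base_vals[OF bM]
    have e2: "exN 7 (137, M) = (121, M')" unfolding M'_def bi_def using bvM fr[of 8] I(2)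
      by (simp add: step_def WB_eq SB_eq fun_eq_iff)
    have inv: "inv3 M' r (insert bi T)" unfolding inv3_def
    proof (intro conjI ballI allI impI)
      show "base_ok M'" unfolding M'_def using bM by (simp add: SB_eq WB_eq)
      show "M' 8 = r" unfolding M'_def by simp
      show "insert bi T \<subseteq> E'" using biE I(3) by simp
      show "card (insert bi T) + r = k" using I(4) biT finT by simp
    next
      fix i assume i: "i < n"
      have "M' (WB + i) = (if i = bi then 0 else M (WB + i))" unfolding M'_def SB_eq WB_eq
        using i by auto
      also have "\<dots> = (if i \<in> insert bi T then 0 else wt i)"
        using fr[of "WB + i"] I(5) i unfolding WB_eq by auto
      finally show "M' (WB + i) = (if i \<in> insert bi T then 0 else wt i)" .
    next
      fix i assume i: "i < n"
      have "M' (SB + i) = (if i = bi then 1 else M (SB + i))" unfolding M'_def SB_eq WB_eq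
        using i bil by auto
      also have "\<dots> = (if i \<in> insert bi T then 1 else 0)"
        using fr[of "SB + i"] I(6) i unfolding SB_eq by auto
      finally show "M' (SB + i) = (if i \<in> insert bi T then 1 else 0)" .
    next
      fix a b assume a: "a \<in> insert bi T" and b: "b < n" "b \<notin> insert bi T"
      show "wt b \<le> wt a"
      proof (cases "a \<in> T")
        case True then show ?thesis using I(7) b by auto
      next
        case False
        then have "a = bi" using a by simp
        have "wt b = m (WB + b)" using I(5) b by simp
        also have "\<dots> \<le> bv" using top b by simp
        finally show ?thesis using wbi \<open>a = bi\<close> by simp
      qed
    qed
    have IH: "leads (121, M') (\<lambda>c. fst c = 144 \<and> (\<exists>T. inv3 (snd c) 0 T)) (r * (12 * n + 11) + 1)"
      by (rule Suc.IH[OF inv])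
    show ?thesis unfolding c by (rule leads_exN[of 7 "(137, M)", unfolded e2, OF IH])
  qed
  have "leads (125, m1) (\<lambda>c. fst c = 144 \<and> (\<exists>T. inv3 (snd c) 0 T)) (n * 12 + (7 + (r * (12 * n + 11) + 1)))"
    by (rule leads_seq[OF S C])
  then have "leads (121, m) (\<lambda>c. fst c = 144 \<and> (\<exists>T. inv3 (snd c) 0 T)) (4 + (n * 12 + (7 + (r * (12 * n + 11) + 1))))"
    by (rule leads_exN[of 4 "(121, m)", unfolded e1])
  then show ?case by (rule leads_mono) (simp_all add: algebra_simps)
qed

lemma finish: "inv3 m 0 T \<Longrightarrow> leads (144, m) (\<lambda>c. fst c = 159 \<and> decode_output n (snd c) = T) (7 + (8 * n + 1))"
proof -
  assume inv: "inv3 m 0 T"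
  have I: "base_ok m" "T \<subseteq> E'" "\<forall>i<n. m (SB + i) = (if i \<in> T then 1 else 0)"
    using inv unfolding inv3_def by auto
  note bv = base_vals[OF I(1)]
  define M where "M = m(3 := n, 1 := SB, 2 := 2, 0 := n + n + 2)"
  have e: "exN 7 (144, M0) = (151, M)" if "M0 = m" for M0 unfolding M_def that using bv
    by (simp add: step_def fun_eq_iff SB_eq)
  have L: "leads (151, M) (\<lambda>c'. fst c' = 151+8 \<and> (\<forall>i<n. snd c' (n + n + 2 + i) = M (SB + i)) \<and>
       (\<forall>a. a \<noteq> 0 \<and> a \<noteq> 1 \<and> a \<noteq> 2 \<and> a \<noteq> 3 \<and> (\<forall>i<n. a \<noteq> n + n + 2 + i) \<longrightarrow> snd c' a = M a)) (8 * n + 1)"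
  proof (rule copy_loop[where L=151 and d=0 and s=1 and t=2 and cnt=3])
    show "\<forall>i<n. \<forall>j<n. n + n + 2 + i \<noteq> SB + j" unfolding SB_eq by auto
  qed (auto simp: M_def SB_eq)
  have "leads (151, M) (\<lambda>c. fst c = 159 \<and> decode_output n (snd c) = T) (8 * n + 1)"
  proof (rule leads_mono[OF L order.refl])
    fix c :: config assume a: "fst c = 151+8 \<and> (\<forall>i<n. snd c (n + n + 2 + i) = M (SB + i)) \<and>
       (\<forall>a. a \<noteq> 0 \<and> a \<noteq> 1 \<and> a \<noteq> 2 \<and> a \<noteq> 3 \<and> (\<forall>i<n. a \<noteq> n + n + 2 + i) \<longrightarrow> snd c a = M a)"
    have "\<And>i. i < n \<Longrightarrow> snd c (2 + 2 * n + i) = (if i \<in> T then 1 else 0)"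
    proof -
      fix i assume i: "i < n"
      have "snd c (2 + 2 * n + i) = M (SB + i)" using a i by (metis add.commute mult_2)
      also have "\<dots> = m (SB + i)" unfolding M_def SB_eq by simp
      finally show "snd c (2 + 2 * n + i) = (if i \<in> T then 1 else 0)" using I(3) i by simp
    qed
    then have "decode_output n (snd c) = T" unfolding decode_output_def using I(2) sub by (auto split: if_splits)
    then show "fst c = 159 \<and> decode_output n (snd c) = T" using a by simp
  qed
  then show ?thesis by (rule leads_exN[of 7 "(144, m)", unfolded e[OF refl]])
qed

lemma cntw_n: "cntw n y = wt y" unfolding cntw_def wt_def wset_def by simp

lemma init3: assumes "base_ok m" "wok m n" "zero m"
  shows "leads (119, m) (\<lambda>c. fst c = 121 \<and> inv3 (snd c) k {}) 2"
proof -
  note bv = base_vals[OF assms(1)]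
  have e: "exN 2 (119, m) = (121, m(8 := k))" using bv by (simp add: step_def)
  have "inv3 (m(8 := k)) k {}" unfolding inv3_def
  proof (intro conjI allI impI ballI)
    show "base_ok (m(8 := k))" using assms(1) by simp
  next
    fix i assume i: "i < n"
    show "(m(8 := k)) (WB + i) = (if i \<in> {} then 0 else wt i)"
      using assms(2) i unfolding wok_def cntw_n WB_eq by simp
    show "(m(8 := k)) (SB + i) = (if i \<in> {} then 1 else 0)"
      using assms(3) i unfolding zero_def SB_eq by simp
  qed auto
  then show ?thesis using leads_exN0[of "\<lambda>c. fst c = 121 \<and> inv3 (snd c) k {}" 2 "(119, m)"] e by simp
qed

lemma total: "leads (0, inp) (\<lambda>c. halted prog c \<and> optimal_hardening {0..<n} idr E' k (decode_output n (snd c)))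
   (300 * (n + 1) ^ 2)"
proof -
  let ?Q = "\<lambda>c. halted prog c \<and> optimal_hardening {0..<n} idr E' k (decode_output n (snd c))"
  have L6: "leads c ?Q (7 + (8 * n + 1))" if q6: "fst c = 144 \<and> (\<exists>T. inv3 (snd c) 0 T)" for c
  proof -
    obtain M where c1: "c = (144, M)" using q6 by (metis prod.collapse)
    then obtain T where c2: "inv3 M 0 T" using q6 by auto
    have c: "c = (144, M)" "inv3 M 0 T" using c1 c2 by auto
    have I: "T \<subseteq> E'" "card T = k" "\<forall>a\<in>T. \<forall>b<n. b \<notin> T \<longrightarrow> wt b \<le> wt a"
      using c(2) unfolding inv3_def by auto
    have opt: "optimal_hardening {0..<n} idr E' k T" by (rule optimal[OF npos I])
    show ?thesis unfolding c(1) by (rule leads_mono[OF finish[OF c(2)] order.refl]) (use opt in \<open>auto simp: halted_def\<close>)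
  qed
  have L5: "leads c ?Q ((k * (12 * n + 11) + 1) + (7 + (8 * n + 1)))" if qq: "fst c = 121 \<and> inv3 (snd c) k {}" for c
  proof -
    obtain M where c: "c = (121, M)" "inv3 M k {}" using qq by (cases c) auto
    show ?thesis unfolding c(1) by (rule leads_seq[OF rounds[OF c(2)] L6])
  qed
  have L4: "leads c ?Q (2 + ((k * (12 * n + 11) + 1) + (7 + (8 * n + 1))))"
    if qq: "fst c = 119 \<and> base_ok (snd c) \<and> wok (snd c) n \<and> zero (snd c)" for c
  proof -
    obtain M where c: "c = (119, M)" "base_ok M" "wok M n" "zero M" using qq by (cases c) auto
    show ?thesis unfolding c(1) by (rule leads_seq[OF init3[OF c(2-4)] L5])
  qed
  have L3: "leads c ?Q (n * (10 * n + 16) + (2 + ((k * (12 * n + 11) + 1) + (7 + (8 * n + 1)))))"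
    if qq: "fst c = 96 \<and> base_ok (snd c) \<and> snd c 8 = 0 \<and> (\<forall>a\<ge>WB. snd c a = 0)" for c
  proof -
    obtain M where c: "c = (96, M)" "base_ok M" "M 8 = 0" "\<forall>a\<ge>WB. M a = 0" using qq by (cases c) auto
    have w: "wok M 0" using c(4) unfolding wok_def cntw_0 by simp
    have z: "zero M" using c(4) unfolding zero_def SB_eq WB_eq by simp
    have O: "leads (96, M) (\<lambda>c. fst c = 119 \<and> base_ok (snd c) \<and> wok (snd c) n \<and> zero (snd c)) (n * (10 * n + 16))"
      using outer[of 0 n M] npos c w z by simp
    show ?thesis unfolding c(1) by (rule leads_seq[OF O L4])
  qed
  have L2: "leads c ?Q ((5 + (8*14+1 + 6)) + (n * (10 * n + 16) + (2 + ((k * (12 * n + 11) + 1) + (7 + (8 * n + 1))))))"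
    if qq: "fst c = 77 \<and> SA (snd c)" for c
  proof -
    obtain M where c: "c = (77, M)" "SA M" using qq by (cases c) auto
    show ?thesis unfolding c(1) by (rule leads_seq[OF tail1[OF c(2)] L3])
  qed
  have L1: "leads (0, inp) ?Q ((16 + (29 + (20 + (4 + (8 * (n + n - 14) + 1))))) +
     ((5 + (8*14+1 + 6)) + (n * (10 * n + 16) + (2 + ((k * (12 * n + 11) + 1) + (7 + (8 * n + 1)))))))"
    by (rule leads_seq[OF head L2])
  have kb: "k * (12 * n + 11) \<le> n * (12 * n + 11)" using kn by simp
  have sb: "n + n - 14 \<le> n + n" by simp
  have "(16 + (29 + (20 + (4 + (8 * (n + n - 14) + 1))))) +
     ((5 + (8*14+1 + 6)) + (n * (10 * n + 16) + (2 + ((k * (12 * n + 11) + 1) + (7 + (8 * n + 1))))))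
     \<le> 300 * (n + 1) ^ 2"
    using kb sb by (simp add: power2_eq_square algebra_simps)
  then show ?thesis by (rule leads_mono[OF L1]) simp
qed

end

lemma halted_fix: "halted prog c \<Longrightarrow> (step prog ^^ s) c = c"
  by (induction s) (auto simp: step_def halted_def)

theorem theorem2:
  "\<exists>(prog :: instr list) (c :: nat) (d :: nat).
     \<forall>(n :: nat) (idr :: nat idrs) (E' :: nat set) (k :: nat).
       wf_system {0..<n} idr \<and> restricted_case_I {0..<n} idr \<and>
       E' \<subseteq> {0..<n} \<and> k < card E' \<longrightarrow>
       (let res = run prog (c * (n + 1) ^ d) (encode_input n idr E' k) in
          halted prog res \<and>
          optimal_hardening {0..<n} idr E' k (decode_output n (snd res)))"
proof -
  have "\<forall>(n :: nat) (idr :: nat idrs) (E' :: nat set) (k :: nat).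
       wf_system {0..<n} idr \<and> restricted_case_I {0..<n} idr \<and>
       E' \<subseteq> {0..<n} \<and> k < card E' \<longrightarrow>
       (let res = run prog (300 * (n + 1) ^ 2) (encode_input n idr E' k) in
          halted prog res \<and>
          optimal_hardening {0..<n} idr E' k (decode_output n (snd res)))"
  proof (intro allI impI)
  fix n :: nat and idr :: "nat idrs" and E' :: "nat set" and k :: nat
  assume a: "wf_system {0..<n} idr \<and> restricted_case_I {0..<n} idr \<and> E' \<subseteq> {0..<n} \<and> k < card E'"
  interpret alg n idr E' k using a by unfold_locales auto
  from total obtain t where t: "t \<le> 300 * (n + 1) ^ 2"
    "halted prog (steps t (0, inp)) \<and> optimal_hardening {0..<n} idr E' k (decode_output n (snd (steps t (0, inp))))"
    unfolding leads_def by blast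
  have "run prog (300 * (n + 1) ^ 2) inp = steps t (0, inp)"
  proof -
    have "run prog (300 * (n + 1) ^ 2) inp = (step prog ^^ (300 * (n + 1) ^ 2 - t + t)) (0, inp)"
      unfolding run_def using t(1) by simp
    also have "\<dots> = (step prog ^^ (300 * (n + 1) ^ 2 - t)) (steps t (0, inp))"
      unfolding steps_def by (simp add: funpow_add)
    also have "\<dots> = steps t (0, inp)" using halted_fix t(2) by blast
    finally show ?thesis .
  qed
  then show "let res = run prog (300 * (n + 1) ^ 2) inp in
          halted prog res \<and> optimal_hardening {0..<n} idr E' k (decode_output n (snd res))"
    using t(2) by simp
qed
  then show ?thesis by blast
qed


end
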